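(* Under the standing assumptions below, let $\Gamma$ be a family of compact rectifiable curves in $X$. Then $\Gamma$ has zero $p$-modulus with respect to $(X,d,\mu)$ if and only if $\Gamma$ has zero $p$-modulus with respect to $(\widehat X,\hat d,\hat\mu_q)$.
   Context: Standing assumptions: $1\le p<\infty$; $(X,d)$ is a complete unbounded metric space with a positive complete Borel measure $\mu$ with $0<\mu(B)<\infty$ for every ball; $\mu$ is doubling and supports a $p$-Poincaré inequality; for a base point $a$ with $|x|=d(x,a)$ there are $s,C_s>0$ with $\mu(B(a,r))/\mu(B(a,R))\ge C_s(r/R)^s$ for $1\le r\le R<\infty$; $X$ is annularly connected for large radii around $a$ (there are $A,R_A\ge1$ such that points $x,y$ with $|x|=|y|\ge R_A$ can be joined by a curve in $B(a,A|x|)\setminus\overline{B(a,|x|/A)}$); and $q>s$. Sphericalization: $\widehat X=X\cup\{\infty\}$, $d_a(x,y)=\frac{d(x,y)}{(1+|x|)(1+|y|)}$ for $x,y\in X$, $d_a(x,\infty)=d_a(\infty,x)=\frac1{1+|x|}$, $d_a(\infty,\infty)=0$, $\hat d(x,y)=\inf\sum_{j=1}^kd_a(x_{j-1},x_j)$ over finite chains in $\widehat X$; $d\hat\mu_q=d\mu/(1+|x|)^q$ on $X$, $\hat\mu_q(\{\infty\})=0$. A family $\Gamma$ of rectifiable curves has zero $p$-modulus in a metric measure space $(Y,\rho,\nu)$ if there is a Borel $g\in L^p(Y,\nu)$, $g\ge0$, with $\int_\gamma g\,ds=\infty$ for every $\gamma\in\Gamma$ ($ds$ the arc length with respect to $\rho$).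 *)

theory Defs
  imports "HOL-Analysis.Analysis"
begin

text \<open>Curves are triples (a, b, gamma) with gamma defined on the compact interval [a,b].\<close>

type_synonym 'a curve = "real \<times> real \<times> (real \<Rightarrow> 'a)"

definition borel_of :: "'a topology \<Rightarrow> 'a measure" where
  "borel_of T = sigma (topspace T) {U. openin T U}"

definition ennpow :: "ennreal \<Rightarrow> real \<Rightarrow> ennreal" where
  "ennpow x e = (if x = \<infinity> then \<infinity> else ennreal (enn2real x powr e))"

definition compact_curve :: "'a set \<Rightarrow> ('a \<Rightarrow> 'a \<Rightarrow> real) \<Rightarrow> 'a curve \<Rightarrow> bool" where
  "compact_curve S \<rho> c = (case c of (a, b, \<gamma>) \<Rightarrow>
      a \<le> b \<and> continuous_map (top_of_set {a..b}) (Metric_space.mtopology S \<rho>) \<gamma>)"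

definition curve_length :: "('a \<Rightarrow> 'a \<Rightarrow> real) \<Rightarrow> (real \<Rightarrow> 'a) \<Rightarrow> real \<Rightarrow> real \<Rightarrow> ennreal" where
  "curve_length \<rho> \<gamma> a b =
     (SUP ts \<in> {ts. ts \<noteq> [] \<and> hd ts = a \<and> last ts = b \<and> sorted ts}.
        ennreal (sum_list (map (\<lambda>(s, t). \<rho> (\<gamma> s) (\<gamma> t)) (zip ts (tl ts)))))"

definition rectifiable_curve :: "'a set \<Rightarrow> ('a \<Rightarrow> 'a \<Rightarrow> real) \<Rightarrow> 'a curve \<Rightarrow> bool" where
  "rectifiable_curve S \<rho> c = (compact_curve S \<rho> c \<and>
      (case c of (a, b, \<gamma>) \<Rightarrow> curve_length \<rho> \<gamma> a b < \<infinity>))"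

text \<open>Line integral with respect to arc length: integral over [0, length] of g composed with
  the arc length parametrization gamma_s, where gamma = gamma_s o s_gamma and
  s_gamma(t) = length of gamma on [a,t].\<close>
definition line_integral :: "('a \<Rightarrow> 'a \<Rightarrow> real) \<Rightarrow> 'a curve \<Rightarrow> ('a \<Rightarrow> ennreal) \<Rightarrow> ennreal" where
  "line_integral \<rho> c g = (case c of (a, b, \<gamma>) \<Rightarrow>
     (let sl = (\<lambda>t. enn2real (curve_length \<rho> \<gamma> a t));
          len = enn2real (curve_length \<rho> \<gamma> a b)
      in \<integral>\<^sup>+ t. g (\<gamma> (SOME u. a \<le> u \<and> u \<le> b \<and> sl u = t)) * indicator {0..len} t \<partial>lborel))"

definition zero_p_modulus :: "'a set \<Rightarrow> ('a \<Rightarrow> 'a \<Rightarrow> real) \<Rightarrow> 'a measure \<Rightarrow> real \<Rightarrow> 'a curve set \<Rightarrow> bool" where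
  "zero_p_modulus S \<rho> \<nu> p \<Gamma> = (\<exists>g :: 'a \<Rightarrow> ennreal.
      g \<in> borel_measurable (borel_of (Metric_space.mtopology S \<rho>)) \<and>
      (\<integral>\<^sup>+ x. ennpow (g x) p \<partial>\<nu>) < \<infinity> \<and>
      (\<forall>c\<in>\<Gamma>. line_integral \<rho> c g = \<infinity>))"

definition complete_measure_cond :: "'a measure \<Rightarrow> bool" where
  "complete_measure_cond \<mu> = (\<forall>A N. N \<in> null_sets \<mu> \<and> A \<subseteq> N \<longrightarrow> A \<in> sets \<mu>)"

definition doubling :: "'a::metric_space measure \<Rightarrow> bool" where
  "doubling \<mu> = (\<exists>C. \<forall>x r. r > 0 \<longrightarrow> emeasure \<mu> (ball x (2 * r)) \<le> ennreal C * emeasure \<mu> (ball x r))"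

definition upper_gradient :: "('a::metric_space \<Rightarrow> real) \<Rightarrow> ('a \<Rightarrow> ennreal) \<Rightarrow> bool" where
  "upper_gradient u g = (\<forall>c. rectifiable_curve UNIV dist c \<longrightarrow>
      (case c of (a, b, \<gamma>) \<Rightarrow> ennreal \<bar>u (\<gamma> a) - u (\<gamma> b)\<bar> \<le> line_integral dist c g))"

definition p_poincare :: "'a::metric_space measure \<Rightarrow> real \<Rightarrow> bool" where
  "p_poincare \<mu> p = (\<exists>C > 0. \<exists>lam \<ge> 1. \<forall>u g x r.
      r > 0 \<and> u \<in> borel_measurable \<mu> \<and> (\<forall>y \<rho>. set_integrable \<mu> (ball y \<rho>) u) \<and>
      g \<in> borel_measurable borel \<and> upper_gradient u g \<longrightarrow>
      (let uB = (\<integral>y\<in>ball x r. u y \<partial>\<mu>) / measure \<mu> (ball x r) in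
        ennreal ((\<integral>y\<in>ball x r. \<bar>u y - uB\<bar> \<partial>\<mu>) / measure \<mu> (ball x r))
        \<le> ennreal (C * r) * ennpow (ennreal (1 / measure \<mu> (ball x (lam * r))) *
               (\<integral>\<^sup>+ y\<in>ball x (lam * r). ennpow (g y) p \<partial>\<mu>)) (1 / p)))"

definition annularly_connected :: "'a::metric_space \<Rightarrow> bool" where
  "annularly_connected a = (\<exists>A RA. A \<ge> 1 \<and> RA \<ge> 1 \<and> (\<forall>x y.
      dist x a = dist y a \<and> dist x a \<ge> RA \<longrightarrow>
      (\<exists>t0 t1 \<gamma>. compact_curve UNIV dist (t0, t1, \<gamma>) \<and> \<gamma> t0 = x \<and> \<gamma> t1 = y \<and>
         \<gamma> ` {t0..t1} \<subseteq> ball a (A * dist x a) - closure (ball a (dist x a / A)))))"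

definition sph_da :: "'a::metric_space \<Rightarrow> 'a option \<Rightarrow> 'a option \<Rightarrow> real" where
  "sph_da a x y = (case (x, y) of
      (Some x', Some y') \<Rightarrow> dist x' y' / ((1 + dist x' a) * (1 + dist y' a))
    | (Some x', None) \<Rightarrow> 1 / (1 + dist x' a)
    | (None, Some y') \<Rightarrow> 1 / (1 + dist y' a)
    | (None, None) \<Rightarrow> 0)"

definition sph_dist :: "'a::metric_space \<Rightarrow> 'a option \<Rightarrow> 'a option \<Rightarrow> real" where
  "sph_dist a x y = (INF xs \<in> {xs. 2 \<le> length xs \<and> hd xs = x \<and> last xs = y}.
      sum_list (map (\<lambda>(u, v). sph_da a u v) (zip xs (tl xs))))"

definition sph_measure :: "'a::metric_space measure \<Rightarrow> 'a \<Rightarrow> real \<Rightarrow> 'a option measure" where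
  "sph_measure \<mu> a q = density (distr \<mu> (sigma UNIV {A. Some -` A \<in> sets \<mu>}) Some)
      (\<lambda>y. case y of None \<Rightarrow> 0 | Some x \<Rightarrow> ennreal (1 / (1 + dist x a) powr q))"

end

theory Submission
  imports Defs "HOL-Probability.Distribution_Functions"
begin

definition cs :: "('b \<Rightarrow> 'b \<Rightarrow> real) \<Rightarrow> 'b list \<Rightarrow> real" where
  "cs f xs = sum_list (map (\<lambda>(u, v). f u v) (zip xs (tl xs)))"

definition parts :: "real \<Rightarrow> real \<Rightarrow> real list set" where
  "parts u v = {ts. ts \<noteq> [] \<and> hd ts = u \<and> last ts = v \<and> sorted ts}"

lemma cs_Nil[simp]: "cs f [] = 0" by (simp add: cs_def)
lemma cs_single[simp]: "cs f [x] = 0" by (simp add: cs_def)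
lemma cs_Cons2[simp]: "cs f (x # y # ys) = f x y + cs f (y # ys)" by (simp add: cs_def)

lemma cs_append: "cs f (xs @ y # ys) = cs f (xs @ [y]) + cs f (y # ys)"
proof (induction xs)
  case Nil then show ?case by simp
next
  case (Cons x xs)
  then show ?case by (cases xs) auto
qed

lemma cs_nonneg: "(\<And>u v. 0 \<le> f u v) \<Longrightarrow> 0 \<le> cs f xs"
  unfolding cs_def by (induction xs) (auto intro!: sum_list_nonneg)

lemma cs_mono:
  assumes "set ts \<subseteq> S" "\<And>s t. s \<in> S \<Longrightarrow> t \<in> S \<Longrightarrow> c * f s t \<le> g s t"
  shows "c * cs f ts \<le> cs g ts"
  using assms(1)
proof (induction ts rule: induct_list012)
  case (3 x y zs)
  then show ?case using assms(2)[of x y] by (simp add: distrib_left add_mono)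
qed auto

lemma curve_length_cs:
  "curve_length \<rho> \<gamma> u v = (SUP ts\<in>parts u v. ennreal (cs (\<lambda>s t. \<rho> (\<gamma> s) (\<gamma> t)) ts))"
  by (simp add: curve_length_def cs_def parts_def)

lemma sorted_hd_last:
  assumes "sorted ts" "x \<in> set ts"
  shows "hd ts \<le> x \<and> x \<le> last ts"
  using assms
proof (induction ts)
  case (Cons y ys)
  then show ?case by (cases ys) auto
qed auto

lemma parts_subset: "ts \<in> parts u v \<Longrightarrow> set ts \<subseteq> {u..v}"
  using sorted_hd_last by (fastforce simp: parts_def)

lemma parts_two: "u \<le> v \<Longrightarrow> [u, v] \<in> parts u v"
  by (simp add: parts_def)

lemma parts_single: "[u] \<in> parts u u"
  by (simp add: parts_def)



lemma cl_ge_dist: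
  assumes "u \<le> v"
  shows "ennreal (\<rho> (\<gamma> u) (\<gamma> v)) \<le> curve_length \<rho> \<gamma> u v"
  unfolding curve_length_cs
  by (rule SUP_upper2[OF parts_two[OF assms]]) simp

lemma parts_concat:
  assumes "ts1 \<in> parts u v" "ts2 \<in> parts v w"
  shows "ts1 @ tl ts2 \<in> parts u w \<and> cs f (ts1 @ tl ts2) = cs f ts1 + cs f ts2"
proof -
  have p1: "ts1 \<noteq> []" "last ts1 = v" and p2: "ts2 \<noteq> []" "hd ts2 = v"
    using assms by (auto simp: parts_def)
  define xs where "xs = butlast ts1"
  define ys where "ys = tl ts2"
  have xs: "ts1 = xs @ [v]" unfolding xs_def using p1 append_butlast_last_id[of ts1] by simp
  have ys: "ts2 = v # ys" unfolding ys_def using p2 hd_Cons_tl[of ts2] by simp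
  have s1: "sorted (xs @ [v])" and s2: "sorted (v # ys)" using assms xs ys by (auto simp: parts_def)
  have "sorted (xs @ v # ys)"
    using s1 s2 by (auto simp: sorted_append intro: order_trans)
  moreover have "hd (xs @ v # ys) = u" using assms(1) xs by (cases xs) (auto simp: parts_def)
  moreover have "last (xs @ v # ys) = w" using assms(2) ys by (auto simp: parts_def)
  ultimately show ?thesis using xs ys cs_append[of f xs v ys] by (simp add: parts_def)
qed

lemma cl_superadd:
  assumes nn: "\<And>x y. 0 \<le> \<rho> x y" and "u \<le> v" "v \<le> w"
  shows "curve_length \<rho> \<gamma> u v + curve_length \<rho> \<gamma> v w \<le> curve_length \<rho> \<gamma> u w"
proof -
  let ?f = "\<lambda>s t. \<rho> (\<gamma> s) (\<gamma> t)"
  have ne1: "parts u v \<noteq> {}" using parts_two[OF assms(2)] by blast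
  have ne2: "parts v w \<noteq> {}" using parts_two[OF assms(3)] by blast
  have "(SUP ts1\<in>parts u v. ennreal (cs ?f ts1)) + (SUP ts2\<in>parts v w. ennreal (cs ?f ts2))
      = (SUP ts1\<in>parts u v. SUP ts2\<in>parts v w. ennreal (cs ?f ts1) + ennreal (cs ?f ts2))"
    by (subst ennreal_SUP_add_left[OF ne1, symmetric]) (simp add: ennreal_SUP_add_right[OF ne2])
  also have "\<dots> \<le> (SUP ts\<in>parts u w. ennreal (cs ?f ts))"
  proof (intro SUP_least)
    fix ts1 ts2 assume "ts1 \<in> parts u v" "ts2 \<in> parts v w"
    from parts_concat[OF this, of ?f] have "ts1 @ tl ts2 \<in> parts u w"
      and eq: "cs ?f (ts1 @ tl ts2) = cs ?f ts1 + cs ?f ts2" by auto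
    moreover have "ennreal (cs ?f ts1) + ennreal (cs ?f ts2) = ennreal (cs ?f (ts1 @ tl ts2))"
      using eq by (simp add: ennreal_plus cs_nonneg nn)
    ultimately show "ennreal (cs ?f ts1) + ennreal (cs ?f ts2) \<le> (SUP ts\<in>parts u w. ennreal (cs ?f ts))"
      by (metis SUP_upper)
  qed
  finally show ?thesis by (simp add: curve_length_cs)
qed

lemma parts_insert:
  assumes nn: "\<And>x y. 0 \<le> f x y" and tri: "\<And>x y z. f x z \<le> f x y + f y z"
  shows "sorted ts \<Longrightarrow> ts \<noteq> [] \<Longrightarrow> hd ts \<le> v \<Longrightarrow> v \<le> last ts \<Longrightarrow>
    \<exists>A B. A \<in> parts (hd ts) v \<and> B \<in> parts v (last ts) \<and> cs f ts \<le> cs f A + cs f B"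
proof (induction ts)
  case Nil then show ?case by simp
next
  case (Cons x ts')
  show ?case
  proof (cases ts')
    case Nil
    then have "x = v" using Cons.prems by simp
    then show ?thesis using Nil by (intro exI[of _ "[v]"]) (simp add: parts_def)
  next
    case (Cons y ys)
    note ts' = this
    have xy: "x \<le> y" and sy: "sorted ts'" using Cons.prems ts' by simp_all
    have lst: "last (x # ts') = last ts'" using ts' by simp
    show ?thesis
    proof (cases "y \<le> v")
      case True
      have "hd ts' \<le> v" "v \<le> last ts'" "ts' \<noteq> []" using True Cons.prems ts' by simp_all
      from Cons.IH[OF sy this(3) this(1) this(2)] obtain A B where AB: "A \<in> parts (hd ts') v"
        "B \<in> parts v (last ts')" "cs f ts' \<le> cs f A + cs f B" by blast
      have Ane: "A \<noteq> []" and hA: "hd A = y" and lA: "last A = v" and sA: "sorted A"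
        using AB(1) ts' by (simp_all add: parts_def)
      define A' where "A' = tl A"
      have A': "A = y # A'" unfolding A'_def using Ane hA hd_Cons_tl[of A] by simp
      have "\<forall>z\<in>set A'. y \<le> z" using sA A' by simp
      then have "\<forall>z\<in>set A. x \<le> z" using xy A' by auto
      then have "sorted (x # A)" using sA by simp
      then have "x # A \<in> parts x v" using lA Ane by (simp add: parts_def)
      moreover have "cs f (x # ts') \<le> cs f (x # A) + cs f B"
        using AB(3) ts' A' by simp
      ultimately show ?thesis using AB(2) lst by (intro exI[of _ "x # A"] exI[of _ B]) simp
    next
      case False
      have "[x, v] \<in> parts x v" using Cons.prems by (simp add: parts_def)
      moreover have "v # ts' \<in> parts v (last (x # ts'))"
      proof -
        have "\<forall>z\<in>set ts'. v \<le> z" using sy ts' False by auto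
        then show ?thesis using sy lst ts' by (simp add: parts_def)
      qed
      moreover have "cs f (x # ts') \<le> cs f [x, v] + cs f (v # ts')"
        using ts' tri[of x y v] by simp
      ultimately show ?thesis by (intro exI[of _ "[x, v]"] exI[of _ "v # ts'"]) simp
    qed
  qed
qed

lemma cl_subadd:
  assumes nn: "\<And>x y. 0 \<le> \<rho> x y" and tri: "\<And>x y z. \<rho> x z \<le> \<rho> x y + \<rho> y z"
    and "u \<le> v" "v \<le> w"
  shows "curve_length \<rho> \<gamma> u w \<le> curve_length \<rho> \<gamma> u v + curve_length \<rho> \<gamma> v w"
  unfolding curve_length_cs
proof (intro SUP_least)
  let ?f = "\<lambda>s t. \<rho> (\<gamma> s) (\<gamma> t)"
  fix ts assume ts: "ts \<in> parts u w"
  then obtain A B where AB: "A \<in> parts u v" "B \<in> parts v w" "cs ?f ts \<le> cs ?f A + cs ?f B"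
    using parts_insert[of ?f ts v] nn tri assms(3,4) by (auto simp: parts_def)
  have "ennreal (cs ?f ts) \<le> ennreal (cs ?f A) + ennreal (cs ?f B)"
    using AB(3) by (simp add: ennreal_plus[symmetric] cs_nonneg nn del: ennreal_plus)
  also have "\<dots> \<le> (SUP ts\<in>parts u v. ennreal (cs ?f ts)) + (SUP ts\<in>parts v w. ennreal (cs ?f ts))"
    using AB by (intro add_mono SUP_upper) auto
  finally show "ennreal (cs ?f ts) \<le> (SUP ts\<in>parts u v. ennreal (cs ?f ts)) + (SUP ts\<in>parts v w. ennreal (cs ?f ts))" .
qed

lemma cl_compare:
  assumes "0 \<le> c" and "\<And>s t. s \<in> {u..v} \<Longrightarrow> t \<in> {u..v} \<Longrightarrow> c * \<rho>1 (\<gamma>1 s) (\<gamma>1 t) \<le> \<rho>2 (\<gamma>2 s) (\<gamma>2 t)"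
  shows "ennreal c * curve_length \<rho>1 \<gamma>1 u v \<le> curve_length \<rho>2 \<gamma>2 u v"
  unfolding curve_length_cs SUP_mult_left_ennreal
proof (intro SUP_mono)
  fix ts assume ts: "ts \<in> parts u v"
  have "c * cs (\<lambda>s t. \<rho>1 (\<gamma>1 s) (\<gamma>1 t)) ts \<le> cs (\<lambda>s t. \<rho>2 (\<gamma>2 s) (\<gamma>2 t)) ts"
    by (rule cs_mono[OF parts_subset[OF ts]]) (use assms(2) in auto)
  then have "ennreal c * ennreal (cs (\<lambda>s t. \<rho>1 (\<gamma>1 s) (\<gamma>1 t)) ts) \<le> ennreal (cs (\<lambda>s t. \<rho>2 (\<gamma>2 s) (\<gamma>2 t)) ts)"
    using assms(1) by (simp add: ennreal_mult'[symmetric] ennreal_leI)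
  then show "\<exists>m\<in>parts u v. ennreal c * ennreal (cs (\<lambda>s t. \<rho>1 (\<gamma>1 s) (\<gamma>1 t)) ts) \<le> ennreal (cs (\<lambda>s t. \<rho>2 (\<gamma>2 s) (\<gamma>2 t)) m)"
    using ts by blast
qed



lemma cs_const: "(\<forall>z\<in>set zs. z = c) \<Longrightarrow> f c c = 0 \<Longrightarrow> cs f zs = 0"
  by (induction zs rule: induct_list012) auto

lemma parts_right:
  assumes tri: "\<And>x y z. f x z \<le> f x y + f y z" and f0: "f t0 t0 = 0"
  shows "sorted ts \<Longrightarrow> ts \<noteq> [] \<Longrightarrow> hd ts = t0 \<Longrightarrow> t < last ts \<Longrightarrow> t0 < t \<Longrightarrow>
    (\<forall>x\<in>set ts. x = t0 \<or> t < x) \<Longrightarrow>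
    \<exists>B\<in>parts t (last ts). cs f ts \<le> f t0 t + cs f B"
proof (induction ts rule: induct_list012)
  case (2 x) then show ?case by simp
next
  case (3 x y ys)
  show ?case
  proof (cases "y = t0")
    case True
    have "\<exists>B\<in>parts t (last (y # ys)). cs f (y # ys) \<le> f t0 t + cs f B"
      using 3 True by (intro "3.IH"(2)) auto
    then show ?thesis using True 3 f0 by auto
  next
    case False
    then have ty: "t < y" using 3 by auto
    have "t # y # ys \<in> parts t (last (x # y # ys))"
      using 3 ty by (auto simp: parts_def)
    moreover have "cs f (x # y # ys) \<le> f t0 t + cs f (t # y # ys)"
      using tri[of x y t] 3 by simp
    ultimately show ?thesis by blast
  qed
qed simp

lemma parts_left:
  assumes tri: "\<And>x y z. f x z \<le> f x y + f y z" and f0: "f t0 t0 = 0"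
  shows "sorted ts \<Longrightarrow> ts \<noteq> [] \<Longrightarrow> last ts = t0 \<Longrightarrow> hd ts < t \<Longrightarrow> t < t0 \<Longrightarrow>
    (\<forall>x\<in>set ts. x = t0 \<or> x < t) \<Longrightarrow>
    \<exists>A\<in>parts (hd ts) t. cs f ts \<le> cs f A + f t t0"
proof (induction ts rule: induct_list012)
  case (2 x) then show ?case by simp
next
  case (3 x y ys)
  show ?case
  proof (cases "y < t")
    case True
    have "\<exists>A\<in>parts (hd (y # ys)) t. cs f (y # ys) \<le> cs f A + f t t0"
      using 3 True by (intro "3.IH"(2)) auto
    then obtain A where A: "A \<in> parts y t" "cs f (y # ys) \<le> cs f A + f t t0" by auto
    have Ane: "A \<noteq> []" and hA: "hd A = y" and lA: "last A = t" and sA: "sorted A"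
      using A(1) by (simp_all add: parts_def)
    define A' where "A' = tl A"
    have A': "A = y # A'" unfolding A'_def using Ane hA hd_Cons_tl[of A] by simp
    have "\<forall>z\<in>set A'. y \<le> z" using sA A' by simp
    moreover have "x \<le> y" using 3 by simp
    ultimately have "\<forall>z\<in>set A. x \<le> z" using A' by auto
    then have "sorted (x # A)" using sA by simp
    then have "x # A \<in> parts (hd (x # y # ys)) t" using lA Ane by (simp add: parts_def)
    moreover have "cs f (x # y # ys) \<le> cs f (x # A) + f t t0"
      using A(2) A' by simp
    ultimately show ?thesis by blast
  next
    case False
    then have y0: "y = t0" using 3 by auto
    have "\<forall>z\<in>set (y # ys). z = t0"
    proof
      fix z assume z: "z \<in> set (y # ys)"
      have "y \<le> z" using 3(3) z by auto
      moreover have "z \<le> t0" using sorted_hd_last[of "y # ys" z] 3 z by auto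
      ultimately show "z = t0" using y0 by auto
    qed
    then have c0: "cs f (y # ys) = 0" by (rule cs_const) (rule f0)
    have "[x, t] \<in> parts (hd (x # y # ys)) t" using 3 by (simp add: parts_def)
    moreover have "cs f (x # y # ys) \<le> cs f [x, t] + f t t0"
      using tri[of x t0 t] c0 y0 by simp
    ultimately show ?thesis by blast
  qed
qed simp

locale curve =
  fixes \<rho> :: "'b \<Rightarrow> 'b \<Rightarrow> real" and \<gamma> :: "real \<Rightarrow> 'b" and a b :: real
  assumes metric: "Metric_space UNIV \<rho>"
    and ab: "a \<le> b"
    and cont: "continuous_map (top_of_set {a..b}) (Metric_space.mtopology UNIV \<rho>) \<gamma>"
    and fin: "curve_length \<rho> \<gamma> a b < \<infinity>"
begin

interpretation M: Metric_space UNIV \<rho> by (rule metric)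

lemma nn: "0 \<le> \<rho> x y" by simp
lemma tri: "\<rho> x z \<le> \<rho> x y + \<rho> y z" by (rule M.triangle) auto
lemma rho0: "\<rho> x x = 0" by simp

abbreviation "cl u v \<equiv> curve_length \<rho> \<gamma> u v"
definition "ell u v = enn2real (cl u v)"

lemma fin_sub: "a \<le> u \<Longrightarrow> u \<le> v \<Longrightarrow> v \<le> b \<Longrightarrow> cl u v < \<infinity>"
proof -
  assume uv: "a \<le> u" "u \<le> v" "v \<le> b"
  have 1: "cl a u + cl u v \<le> cl a v" by (rule cl_superadd[where \<rho>=\<rho>, OF nn]) (use uv in auto)
  have 2: "cl a v + cl v b \<le> cl a b" by (rule cl_superadd[where \<rho>=\<rho>, OF nn]) (use uv in auto)
  have "cl u v \<le> cl a u + cl u v" by (rule add_increasing[OF zero_le order_refl])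
  also have "\<dots> \<le> cl a v" by (rule 1)
  also have "\<dots> \<le> cl a v + cl v b" by (rule add_increasing2[OF zero_le order_refl])
  also have "\<dots> \<le> cl a b" by (rule 2)
  finally have "cl u v \<le> cl a b" .
  then show ?thesis using fin by auto
qed

lemma cl_eq: "a \<le> u \<Longrightarrow> u \<le> v \<Longrightarrow> v \<le> b \<Longrightarrow> cl u v = ennreal (ell u v)"
  unfolding ell_def using fin_sub by (simp add: ennreal_enn2real_if less_top)

lemma ell_nonneg: "0 \<le> ell u v" unfolding ell_def by simp

lemma ell_add:
  assumes "a \<le> u" "u \<le> v" "v \<le> w" "w \<le> b"
  shows "ell u w = ell u v + ell v w"
proof -
  have "cl u w = cl u v + cl v w"
    using cl_superadd[where \<rho>=\<rho> and u=u and v=v and w=w and \<gamma>=\<gamma>, OF nn] cl_subadd[where \<rho>=\<rho> and u=u and v=v and w=w and \<gamma>=\<gamma>, OF nn tri] assms by auto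
  then have "ennreal (ell u w) = ennreal (ell u v + ell v w)"
    using assms by (simp add: cl_eq ell_nonneg)
  then show ?thesis using ennreal_inj[of "ell u w" "ell u v + ell v w"] ell_nonneg[of u w]
      ell_nonneg[of u v] ell_nonneg[of v w] by (simp del: ennreal_plus)
qed

lemma ell_refl: "a \<le> u \<Longrightarrow> u \<le> b \<Longrightarrow> ell u u = 0"
  using ell_add[of u u u] by auto

lemma dist_le_ell: "a \<le> u \<Longrightarrow> u \<le> v \<Longrightarrow> v \<le> b \<Longrightarrow> \<rho> (\<gamma> u) (\<gamma> v) \<le> ell u v"
  using cl_ge_dist[where u=u and v=v and \<rho>=\<rho> and \<gamma>=\<gamma>] by (simp add: cl_eq ell_nonneg)

lemma cont_eps:
  assumes "t \<in> {a..b}" "e > 0"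
  shows "\<exists>d>0. \<forall>t'\<in>{a..b}. \<bar>t' - t\<bar> < d \<longrightarrow> \<rho> (\<gamma> t) (\<gamma> t') < e"
proof -
  have "\<forall>x\<in>{a..b}. \<forall>\<epsilon>>0. \<exists>U. openin (top_of_set {a..b}) U \<and> x \<in> U \<and> (\<forall>y\<in>U. \<rho> (\<gamma> x) (\<gamma> y) < \<epsilon>)"
    using cont unfolding M.continuous_map_to_metric by simp
  then obtain U where U: "openin (top_of_set {a..b}) U" "t \<in> U"
    "\<forall>y\<in>U. \<rho> (\<gamma> t) (\<gamma> y) < e" using assms by blast
  from U(1) obtain T where T: "open T" "U = T \<inter> {a..b}" by (auto simp: openin_open)
  then obtain d where d: "d > 0" "ball t d \<subseteq> T" using U(2) open_contains_ball by blast
  show ?thesis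
  proof (intro exI[of _ d] conjI ballI impI)
    fix t' assume "t' \<in> {a..b}" "\<bar>t' - t\<bar> < d"
    then have "t' \<in> U" using d T by (auto simp: dist_real_def)
    then show "\<rho> (\<gamma> t) (\<gamma> t') < e" using U(3) by auto
  qed (rule d)
qed

lemma right_cont:
  assumes "a \<le> t0" "t0 < b" "e > 0"
  shows "\<exists>d>0. \<forall>t. t0 < t \<and> t < t0 + d \<and> t \<le> b \<longrightarrow> ell t0 t < e"
proof (cases "ell t0 b < e")
  case True
  show ?thesis
  proof (intro exI[of _ 1] conjI allI impI)
    fix t assume "t0 < t \<and> t < t0 + 1 \<and> t \<le> b"
    then have "ell t0 b = ell t0 t + ell t b" using assms by (intro ell_add) auto
    then show "ell t0 t < e" using True ell_nonneg[of t b] by linarith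
  qed simp
next
  case False
  let ?f = "\<lambda>s t. \<rho> (\<gamma> s) (\<gamma> t)"
  have "ennreal (ell t0 b - e/2) < cl t0 b"
    using False assms cl_eq[of t0 b] by (simp add: ennreal_lessI)
  then obtain ts where ts: "ts \<in> parts t0 b" "ennreal (ell t0 b - e/2) < ennreal (cs ?f ts)"
    unfolding curve_length_cs less_SUP_iff by blast
  then have big: "ell t0 b - e/2 < cs ?f ts"
    using ennreal_less_iff[of "ell t0 b - e/2"] False assms by simp
  obtain d1 where d1: "d1 > 0" "\<forall>t'\<in>{a..b}. \<bar>t' - t0\<bar> < d1 \<longrightarrow> \<rho> (\<gamma> t0) (\<gamma> t') < e/2"
    using cont_eps[of t0 "e/2"] assms by auto
  define D where "D = {x\<in>set ts. t0 < x}"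
  have "b \<in> D" using ts(1) assms unfolding D_def parts_def by auto
  then have Dne: "D \<noteq> {}" and Dfin: "finite D" unfolding D_def by auto
  define d2 where "d2 = Min ((\<lambda>x. x - t0) ` D)"
  have d2: "d2 > 0" unfolding d2_def using Dne Dfin by (auto simp: D_def)
  have d2le: "t0 + d2 \<le> x" if "x \<in> D" for x
  proof -
    have "Min ((\<lambda>x. x - t0) ` D) \<le> x - t0" using Dfin that by (intro Min_le) auto
    then show ?thesis unfolding d2_def by simp
  qed
  show ?thesis
  proof (intro exI[of _ "min d1 d2"] conjI allI impI)
    fix t assume t: "t0 < t \<and> t < t0 + min d1 d2 \<and> t \<le> b"
    have "\<forall>x\<in>set ts. x = t0 \<or> t < x"
    proof
      fix x assume x: "x \<in> set ts"
      have "t0 \<le> x" using sorted_hd_last[of ts x] ts(1) x by (auto simp: parts_def)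
      then show "x = t0 \<or> t < x" using d2le[of x] t x by (force simp: D_def)
    qed
    moreover have "t < last ts" using t ts(1) d2le[OF \<open>b \<in> D\<close>] by (auto simp: parts_def)
    ultimately obtain B where B: "B \<in> parts t b" "cs ?f ts \<le> ?f t0 t + cs ?f B"
      using parts_right[of ?f t0 ts t] tri ts(1) t by (auto simp: parts_def)
    have "ennreal (cs ?f B) \<le> cl t b" unfolding curve_length_cs using B(1) by (rule SUP_upper)
    then have "cs ?f B \<le> ell t b" using cl_eq[of t b] t assms ennreal_le_iff[OF ell_nonneg[of t b]] by simp
    moreover have "?f t0 t < e/2" using d1 t assms by auto
    moreover have "ell t0 b = ell t0 t + ell t b" using t assms by (intro ell_add) auto
    ultimately show "ell t0 t < e" using big B(2) by linarith
  qed (use d1 d2 in auto)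
qed


lemma left_cont:
  assumes "a < t0" "t0 \<le> b" "e > 0"
  shows "\<exists>d>0. \<forall>t. t0 - d < t \<and> t < t0 \<and> a \<le> t \<longrightarrow> ell t t0 < e"
proof (cases "ell a t0 < e")
  case True
  show ?thesis
  proof (intro exI[of _ 1] conjI allI impI)
    fix t assume "t0 - 1 < t \<and> t < t0 \<and> a \<le> t"
    then have "ell a t0 = ell a t + ell t t0" using assms by (intro ell_add) auto
    then show "ell t t0 < e" using True ell_nonneg[of a t] by linarith
  qed simp
next
  case False
  let ?f = "\<lambda>s t. \<rho> (\<gamma> s) (\<gamma> t)"
  have "ennreal (ell a t0 - e/2) < cl a t0"
    using False assms cl_eq[of a t0] by (simp add: ennreal_lessI)
  then obtain ts where ts: "ts \<in> parts a t0" "ennreal (ell a t0 - e/2) < ennreal (cs ?f ts)"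
    unfolding curve_length_cs less_SUP_iff by blast
  then have big: "ell a t0 - e/2 < cs ?f ts"
    using ennreal_less_iff[of "ell a t0 - e/2"] False assms by simp
  obtain d1 where d1: "d1 > 0" "\<forall>t'\<in>{a..b}. \<bar>t' - t0\<bar> < d1 \<longrightarrow> \<rho> (\<gamma> t0) (\<gamma> t') < e/2"
    using cont_eps[of t0 "e/2"] assms by auto
  define D where "D = {x\<in>set ts. x < t0}"
  have "a \<in> D" using ts(1) assms unfolding D_def parts_def by (auto intro: hd_in_set)
  then have Dne: "D \<noteq> {}" and Dfin: "finite D" unfolding D_def by auto
  define d2 where "d2 = Min ((\<lambda>x. t0 - x) ` D)"
  have d2: "d2 > 0" unfolding d2_def using Dne Dfin by (auto simp: D_def)
  have d2le: "x \<le> t0 - d2" if "x \<in> D" for x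
  proof -
    have "Min ((\<lambda>x. t0 - x) ` D) \<le> t0 - x" using Dfin that by (intro Min_le) auto
    then show ?thesis unfolding d2_def by simp
  qed
  show ?thesis
  proof (intro exI[of _ "min d1 d2"] conjI allI impI)
    fix t assume t: "t0 - min d1 d2 < t \<and> t < t0 \<and> a \<le> t"
    have "\<forall>x\<in>set ts. x = t0 \<or> x < t"
    proof
      fix x assume x: "x \<in> set ts"
      have "x \<le> t0" using sorted_hd_last[of ts x] ts(1) x by (auto simp: parts_def)
      then show "x = t0 \<or> x < t" using d2le[of x] t x by (force simp: D_def)
    qed
    moreover have "hd ts < t" using t ts(1) d2le[OF \<open>a \<in> D\<close>] by (auto simp: parts_def)
    ultimately obtain A where A: "A \<in> parts a t" "cs ?f ts \<le> cs ?f A + ?f t t0"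
      using parts_left[of ?f t0 ts t] tri ts(1) t by (auto simp: parts_def)
    have "ennreal (cs ?f A) \<le> cl a t" unfolding curve_length_cs using A(1) by (rule SUP_upper)
    then have "cs ?f A \<le> ell a t" using cl_eq[of a t] t assms ennreal_le_iff[OF ell_nonneg[of a t]] by simp
    moreover have "?f t t0 < e/2" using d1 t assms M.commute[of "\<gamma> t" "\<gamma> t0"] by auto
    moreover have "ell a t0 = ell a t + ell t t0" using t assms by (intro ell_add) auto
    ultimately show "ell t t0 < e" using big A(2) by linarith
  qed (use d1 d2 in auto)
qed

definition "sl t = ell a t"
definition "L = sl b"

lemma sl_diff: "a \<le> u \<Longrightarrow> u \<le> v \<Longrightarrow> v \<le> b \<Longrightarrow> sl v - sl u = ell u v"
  unfolding sl_def using ell_add[of a u v] by simp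

lemma sl_mono: "a \<le> u \<Longrightarrow> u \<le> v \<Longrightarrow> v \<le> b \<Longrightarrow> sl u \<le> sl v"
  using sl_diff[of u v] ell_nonneg[of u v] by simp

lemma sl_a: "sl a = 0" unfolding sl_def using ell_refl[of a] ab by simp

lemma L_nonneg: "0 \<le> L" unfolding L_def sl_def by (rule ell_nonneg)

lemma sl_cont: "continuous_on {a..b} sl"
  unfolding continuous_on_iff
proof (intro ballI allI impI)
  fix x e :: real assume x: "x \<in> {a..b}" and e: "0 < e"
  obtain d1 where d1: "d1 > 0" "\<forall>t. x < t \<and> t < x + d1 \<and> t \<le> b \<longrightarrow> ell x t < e"
  proof (cases "x < b")
    case True then show ?thesis using right_cont[of x e] x e that by auto
  next
    case False then show ?thesis using that[of 1] x by auto
  qed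
  obtain d2 where d2: "d2 > 0" "\<forall>t. x - d2 < t \<and> t < x \<and> a \<le> t \<longrightarrow> ell t x < e"
  proof (cases "a < x")
    case True then show ?thesis using left_cont[of x e] x e that by auto
  next
    case False then show ?thesis using that[of 1] x by auto
  qed
  show "\<exists>d>0. \<forall>x'\<in>{a..b}. dist x' x < d \<longrightarrow> dist (sl x') (sl x) < e"
  proof (intro exI[of _ "min d1 d2"] conjI ballI impI)
    fix x' assume x': "x' \<in> {a..b}" "dist x' x < min d1 d2"
    consider "x < x'" | "x' < x" | "x' = x" by linarith
    then show "dist (sl x') (sl x) < e"
    proof cases
      case 1 then show ?thesis using d1 x x' sl_diff[of x x'] ell_nonneg[of x x']
        by (auto simp: dist_real_def)
    next
      case 2 then show ?thesis using d2 x x' sl_diff[of x' x] ell_nonneg[of x' x]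
        by (auto simp: dist_real_def)
    qed (use e in simp)
  qed (use d1 d2 in simp)
qed

lemma sl_onto: "0 \<le> \<sigma> \<Longrightarrow> \<sigma> \<le> L \<Longrightarrow> \<exists>u. a \<le> u \<and> u \<le> b \<and> sl u = \<sigma>"
  using IVT'[of sl a \<sigma> b] sl_cont sl_a ab unfolding L_def by auto

definition "us \<sigma> = (SOME u. a \<le> u \<and> u \<le> b \<and> sl u = \<sigma>)"

lemma us: "0 \<le> \<sigma> \<Longrightarrow> \<sigma> \<le> L \<Longrightarrow> a \<le> us \<sigma> \<and> us \<sigma> \<le> b \<and> sl (us \<sigma>) = \<sigma>"
  unfolding us_def by (rule someI_ex) (rule sl_onto)

lemma wd1: "a \<le> u \<Longrightarrow> u \<le> v \<Longrightarrow> v \<le> b \<Longrightarrow> sl u = sl v \<Longrightarrow> \<gamma> u = \<gamma> v"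
proof -
  assume uv: "a \<le> u" "u \<le> v" "v \<le> b" "sl u = sl v"
  have "\<rho> (\<gamma> u) (\<gamma> v) \<le> ell u v" by (rule dist_le_ell) (use uv in auto)
  also have "ell u v = sl v - sl u" using sl_diff[of u v] uv by simp
  finally have "\<rho> (\<gamma> u) (\<gamma> v) = 0" using uv(4) M.nonneg[of "\<gamma> u" "\<gamma> v"] by linarith
  then show ?thesis using M.zero[of "\<gamma> u" "\<gamma> v"] by blast
qed

lemma wd: "a \<le> u \<Longrightarrow> u \<le> b \<Longrightarrow> a \<le> v \<Longrightarrow> v \<le> b \<Longrightarrow> sl u = sl v \<Longrightarrow> \<gamma> u = \<gamma> v"
  by (metis linorder_le_cases wd1)

definition "clmp \<sigma> = max 0 (min L \<sigma>)"

definition "eta \<sigma> = \<gamma> (us (clmp \<sigma>))"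

lemma clmp: "0 \<le> clmp \<sigma>" "clmp \<sigma> \<le> L" "\<bar>clmp \<sigma> - clmp \<tau>\<bar> \<le> \<bar>\<sigma> - \<tau>\<bar>"
  "0 \<le> \<sigma> \<Longrightarrow> \<sigma> \<le> L \<Longrightarrow> clmp \<sigma> = \<sigma>"
  unfolding clmp_def using L_nonneg by auto

lemma us_lip: "0 \<le> \<sigma> \<Longrightarrow> \<sigma> \<le> L \<Longrightarrow> 0 \<le> \<tau> \<Longrightarrow> \<tau> \<le> L \<Longrightarrow> \<rho> (\<gamma> (us \<sigma>)) (\<gamma> (us \<tau>)) \<le> \<bar>\<sigma> - \<tau>\<bar>"
proof -
  have *: "\<rho> (\<gamma> (us \<sigma>)) (\<gamma> (us \<tau>)) \<le> \<bar>\<sigma> - \<tau>\<bar>"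
    if "0 \<le> \<sigma>" "\<sigma> \<le> L" "0 \<le> \<tau>" "\<tau> \<le> L" "us \<sigma> \<le> us \<tau>" for \<sigma> \<tau>
    using dist_le_ell[of "us \<sigma>" "us \<tau>"] sl_diff[of "us \<sigma>" "us \<tau>"] us[of \<sigma>] us[of \<tau>] that by auto
  assume "0 \<le> \<sigma>" "\<sigma> \<le> L" "0 \<le> \<tau>" "\<tau> \<le> L"
  then show ?thesis using *[of \<sigma> \<tau>] *[of \<tau> \<sigma>] M.commute[of "\<gamma> (us \<sigma>)" "\<gamma> (us \<tau>)"]
    by (cases "us \<sigma> \<le> us \<tau>") (auto simp: abs_minus_commute)
qed

lemma eta_lip: "\<rho> (eta \<sigma>) (eta \<tau>) \<le> \<bar>\<sigma> - \<tau>\<bar>"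
  unfolding eta_def using us_lip[OF clmp(1,2) clmp(1,2), of \<sigma> \<tau>] clmp(3)[of \<sigma> \<tau>] by linarith

lemma eta_cont: "continuous_map euclidean (Metric_space.mtopology UNIV \<rho>) eta"
  unfolding M.continuous_map_to_metric
proof (intro ballI allI impI)
  fix x :: real and e :: real assume e: "0 < e"
  have "\<forall>y\<in>ball x e. eta y \<in> M.mball (eta x) e"
  proof
    fix y assume "y \<in> ball x e"
    then have "\<bar>x - y\<bar> < e" by (simp add: dist_real_def)
    then have "\<rho> (eta x) (eta y) < e" using eta_lip[of x y] by linarith
    then show "eta y \<in> M.mball (eta x) e" by simp
  qed
  then show "\<exists>U. openin euclidean U \<and> x \<in> U \<and> (\<forall>y\<in>U. eta y \<in> M.mball (eta x) e)"
    using e by (intro exI[of _ "ball x e"]) auto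
qed

lemma eta_eq: "0 \<le> \<sigma> \<Longrightarrow> \<sigma> \<le> L \<Longrightarrow> \<gamma> (SOME u. a \<le> u \<and> u \<le> b \<and> enn2real (curve_length \<rho> \<gamma> a u) = \<sigma>) = eta \<sigma>"
  unfolding eta_def using clmp(4) by (simp add: us_def sl_def ell_def)

lemma line_integral_eq:
  "line_integral \<rho> (a, b, \<gamma>) g = (\<integral>\<^sup>+ \<sigma>. g (eta \<sigma>) * indicator {0..L} \<sigma> \<partial>lborel)"
  unfolding line_integral_def Let_def prod.case
proof (intro nn_integral_cong)
  fix \<sigma> :: real
  show "g (\<gamma> (SOME u. a \<le> u \<and> u \<le> b \<and> enn2real (cl a u) = \<sigma>)) * indicator {0..enn2real (cl a b)} \<sigma> =
        g (eta \<sigma>) * indicator {0..L} \<sigma>"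
  proof (cases "0 \<le> \<sigma> \<and> \<sigma> \<le> L")
    case True
    then show ?thesis using eta_eq[of \<sigma>] by (simp add: L_def sl_def ell_def)
  next
    case False
    then show ?thesis by (auto simp: L_def sl_def ell_def indicator_def)
  qed
qed
end



lemma meas_compare:
  fixes M N :: "real measure"
  assumes sM: "sets M = sets borel" and sN: "sets N = sets borel"
    and fM: "finite_measure M" and fN: "finite_measure N" and c: "0 \<le> c"
    and iv: "\<And>x y. x \<le> y \<Longrightarrow> c * measure M {x<..y} \<le> measure N {x<..y}"
    and A: "A \<in> sets borel"
  shows "c * measure M A \<le> measure N A"
proof -
  interpret M: finite_borel_measure M using fM sM by (simp add: finite_borel_measure_def finite_borel_measure_axioms_def)
  interpret N: finite_borel_measure N using fN sN by (simp add: finite_borel_measure_def finite_borel_measure_axioms_def)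
  define F where "F x = cdf N x - c * cdf M x" for x
  have Fdiff: "F y - F x = measure N {x<..y} - c * measure M {x<..y}" if "x \<le> y" for x y
  proof (cases "x = y")
    case True then show ?thesis by (simp add: F_def)
  next
    case False
    then have "x < y" using that by simp
    then show ?thesis unfolding F_def using M.cdf_diff_eq[of x y] N.cdf_diff_eq[of x y]
      by (simp add: algebra_simps)
  qed
  have Fmono: "F x \<le> F y" if "x \<le> y" for x y
    using Fdiff[OF that] iv[OF that] by simp
  have Fcont: "continuous (at_right x) F" for x
    unfolding F_def by (intro continuous_intros M.cdf_is_right_cont N.cdf_is_right_cont)
  define K where "K = interval_measure F"
  have sK: "sets K = sets borel" unfolding K_def by simp
  have Kiv: "emeasure K {x<..y} = ennreal (measure N {x<..y} - c * measure M {x<..y})" if "x \<le> y" for x y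
    unfolding K_def using emeasure_interval_measure_Ioc[OF that Fmono Fcont] Fdiff[OF that] by simp
  have Kiv_le: "emeasure K {x<..y} \<le> emeasure N UNIV" if "x \<le> y" for x y
  proof -
    have "0 \<le> c * measure M {x<..y}" using c by simp
    moreover have "measure N {x<..y} \<le> measure N UNIV"
      using N.finite_measure_mono[of "{x<..y}" UNIV] sN by simp
    ultimately have "measure N {x<..y} - c * measure M {x<..y} \<le> measure N UNIV" by linarith
    then show ?thesis using Kiv[OF that] N.emeasure_eq_measure[of UNIV] by (simp add: ennreal_leI)
  qed
  define I where "I n = {- real n <.. real n}" for n
  have Iinc: "incseq I" unfolding I_def incseq_def by auto
  have Iun: "(\<Union>n. I n) = UNIV" unfolding I_def by (rule UN_Ioc_eq_UNIV)
  have Isets: "range I \<subseteq> sets borel" unfolding I_def by auto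
  have "emeasure K UNIV = (SUP n. emeasure K (I n))"
    using SUP_emeasure_incseq[of I K] Iinc Isets Iun sK by simp
  also have "\<dots> \<le> emeasure N UNIV" by (intro SUP_least) (auto simp: I_def intro: Kiv_le)
  finally have "emeasure K UNIV < \<infinity>" using N.emeasure_real[of UNIV] by (auto intro: le_less_trans)
  then interpret K: finite_measure K
    using sK by (intro finite_measureI) (simp add: K_def)
  have Kmeas: "measure K {x<..y} = measure N {x<..y} - c * measure M {x<..y}" if "x \<le> y" for x y
    using Kiv[OF that] iv[OF that] K.emeasure_eq_measure by simp
  have spK: "space K = UNIV" unfolding K_def by simp
  let ?P = "\<lambda>A. measure N A = measure K A + c * measure M A"
  have PUNIV: "?P UNIV"
  proof -
    have "(\<lambda>n. measure N (I n)) \<longlonglongrightarrow> measure N UNIV"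
      using N.finite_Lim_measure_incseq[of I] Iinc Isets Iun sN by simp
    moreover have "(\<lambda>n. measure K (I n) + c * measure M (I n)) \<longlonglongrightarrow> measure K UNIV + c * measure M UNIV"
      using K.finite_Lim_measure_incseq[of I] M.finite_Lim_measure_incseq[of I] Iinc Isets Iun sK sM
      by (intro tendsto_intros) auto
    moreover have "measure N (I n) = measure K (I n) + c * measure M (I n)" for n
      unfolding I_def by (subst Kmeas) auto
    ultimately show ?thesis using LIMSEQ_unique by simp
  qed
  have Amem: "A \<in> sigma_sets UNIV (range (\<lambda>(a, b). {a<..b::real}))"
    using A by (simp add: borel_sigma_sets_Ioc)
  have IS: "Int_stable (range (\<lambda>(a, b). {a<..b::real}))"
  proof (rule Int_stableI_image)
    fix i j :: "real \<times> real"
    obtain a1 b1 a2 b2 where "i = (a1, b1)" "j = (a2, b2)" by (cases i, cases j)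
    then show "\<exists>k\<in>UNIV. (\<lambda>(a, b). {a<..b}) i \<inter> (\<lambda>(a, b). {a<..b}) j = (\<lambda>(a, b). {a<..b::real}) k"
      by (intro bexI[of _ "(max a1 a2, min b1 b2)"]) auto
  qed
  have PW: "range (\<lambda>(a, b). {a<..b::real}) \<subseteq> Pow UNIV" by simp
  from IS PW Amem have "?P A"
  proof (induction rule: sigma_sets_induct_disjoint)
    case (basic A)
    then obtain x y where A: "A = {x<..y}" by auto
    show ?case
    proof (cases "x \<le> y")
      case True then show ?thesis using Kmeas[OF True] A by simp
    next
      case False then show ?thesis using A by simp
    qed
  next
    case empty then show ?case by simp
  next
    case (compl A)
    then have Ab: "A \<in> sets borel" by (simp add: borel_sigma_sets_Ioc)
    have "measure N (UNIV - A) = measure N UNIV - measure N A"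
      using N.finite_measure_compl[of A] Ab sN N.borel_UNIV by simp
    moreover have "measure K (UNIV - A) = measure K UNIV - measure K A"
      using K.finite_measure_compl[of A] Ab sK spK by simp
    moreover have "measure M (UNIV - A) = measure M UNIV - measure M A"
      using M.finite_measure_compl[of A] Ab sM M.borel_UNIV by simp
    ultimately show ?case using PUNIV compl.IH by (simp add: right_diff_distrib)
  next
    case (union A)
    then have Ab: "range A \<subseteq> sets borel" by (simp add: borel_sigma_sets_Ioc)
    have "(\<lambda>i. measure N (A i)) sums measure N (\<Union>i. A i)"
      using N.finite_measure_UNION[of A] Ab sN union.hyps by simp
    moreover have "(\<lambda>i. measure K (A i) + c * measure M (A i)) sums (measure K (\<Union>i. A i) + c * measure M (\<Union>i. A i))"
      using K.finite_measure_UNION[of A] M.finite_measure_UNION[of A] Ab sK sM union.hyps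
      by (intro sums_add sums_mult) auto
    ultimately show ?case using union.IH sums_unique2 by (metis (no_types, lifting) sums_cong)
  qed
  then show ?thesis using measure_nonneg[of K A] by simp
qed

lemma nn_integral_compare:
  fixes M N :: "real measure"
  assumes sM: "sets M = sets borel" and sN: "sets N = sets borel"
    and fM: "finite_measure M" and fN: "finite_measure N" and c: "0 \<le> c"
    and iv: "\<And>x y. x \<le> y \<Longrightarrow> c * measure M {x<..y} \<le> measure N {x<..y}"
    and f: "f \<in> borel_measurable borel"
  shows "ennreal c * (\<integral>\<^sup>+x. f x \<partial>M) \<le> (\<integral>\<^sup>+x. f x \<partial>N)"
proof -
  have fM': "f \<in> borel_measurable M" by (subst measurable_cong_sets[OF sM refl]) (rule f)
  have "ennreal c * (\<integral>\<^sup>+x. f x \<partial>M) = (\<integral>\<^sup>+x. f x \<partial>scale_measure (ennreal c) M)"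
    by (rule nn_integral_scale_measure[OF fM', symmetric])
  also have "\<dots> \<le> (\<integral>\<^sup>+x. f x \<partial>N)"
  proof (rule nn_integral_mono_measure)
    show ss: "sets (scale_measure (ennreal c) M) = sets N" using sM sN by simp
    have sp: "space (scale_measure (ennreal c) M) = space N"
      using sets_eq_imp_space_eq[OF ss] .
    have "emeasure (scale_measure (ennreal c) M) A \<le> emeasure N A" for A
    proof (cases "A \<in> sets borel")
      case True
      have "c * measure M A \<le> measure N A" by (rule meas_compare[OF sM sN fM fN c iv True])
      then show ?thesis
        using finite_measure.emeasure_eq_measure[OF fM, of A] finite_measure.emeasure_eq_measure[OF fN, of A] c
        by (simp add: ennreal_mult'[symmetric] ennreal_leI)
    next
      case False
      then have "A \<notin> sets M" using sM by simp
      then show ?thesis by (simp add: emeasure_notin_sets)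
    qed
    then show "scale_measure (ennreal c) M \<le> N"
      unfolding le_measure_iff using sp ss by (auto simp: le_fun_def)
  qed
  finally show ?thesis .
qed



lemma borel_of_measurable:
  assumes "continuous_map T1 T2 f"
  shows "f \<in> measurable (borel_of T1) (borel_of T2)"
  unfolding borel_of_def
proof (rule measurable_measure_of)
  show "{U. openin T2 U} \<subseteq> Pow (topspace T2)" by (auto dest: openin_subset)
  show "f \<in> space (sigma (topspace T1) {U. openin T1 U}) \<rightarrow> topspace T2"
    using assms by (auto simp: space_measure_of_conv continuous_map_def)
  fix U assume "U \<in> {U. openin T2 U}"
  then have "openin T1 {x \<in> topspace T1. f x \<in> U}"
    using assms by (simp add: continuous_map_def)
  moreover have "{x \<in> topspace T1. f x \<in> U} = f -` U \<inter> space (sigma (topspace T1) {U. openin T1 U})"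
    by (auto simp: space_measure_of_conv)
  ultimately show "f -` U \<inter> space (sigma (topspace T1) {U. openin T1 U}) \<in> sets (sigma (topspace T1) {U. openin T1 U})"
    by (metis (mono_tags, lifting) mem_Collect_eq openin_subset sigma_sets.Basic sets_measure_of Pow_iff subsetI)
qed

lemma borel_of_euclidean: "borel_of euclidean = borel"
  by (simp add: borel_of_def borel_def)

lemma interval_preimage:
  fixes \<phi> :: "real \<Rightarrow> real"
  assumes cont: "continuous_on UNIV \<phi>"
    and lip: "\<And>\<tau> \<tau>'. 0 \<le> \<tau> \<Longrightarrow> \<tau> \<le> \<tau>' \<Longrightarrow> \<tau>' \<le> L2 \<Longrightarrow> \<phi> \<tau>' - \<phi> \<tau> \<le> (\<tau>' - \<tau>) / c"
    and c: "c > 0" and \<phi>0: "\<phi> 0 = 0" and \<phi>L: "\<phi> L2 = L1" and L2: "0 \<le> L2"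
    and xy: "0 \<le> x" "x \<le> y" "y \<le> L1"
  shows "c * (y - x) \<le> measure lborel ({\<tau>. x < \<phi> \<tau> \<and> \<phi> \<tau> \<le> y} \<inter> {0..L2})"
proof -
  define U where "U = {0..L2} \<inter> {\<tau>. \<phi> \<tau> \<le> x}"
  have "0 \<in> U" unfolding U_def using L2 \<phi>0 xy by simp
  have cU: "closed U" unfolding U_def
    by (intro closed_Int closed_atLeastAtMost closed_Collect_le cont continuous_on_const)
  have bU: "bdd_above U" unfolding U_def by (auto intro: bdd_aboveI[of _ L2])
  define t where "t = Sup U"
  have tU: "t \<in> U" unfolding t_def using closed_contains_Sup[of U] \<open>0 \<in> U\<close> cU bU by auto
  then have t: "0 \<le> t" "t \<le> L2" "\<phi> t \<le> x" unfolding U_def by auto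
  have after: "x < \<phi> \<tau>" if "t < \<tau>" "\<tau> \<le> L2" for \<tau>
  proof (rule ccontr)
    assume "\<not> x < \<phi> \<tau>"
    then have "\<tau> \<in> U" unfolding U_def using that t by auto
    then have "\<tau> \<le> t" unfolding t_def using bU by (rule cSup_upper)
    then show False using that by simp
  qed
  have "L1 - \<phi> t \<le> (L2 - t) / c" using lip[of t L2] t \<phi>L by simp
  then have "c * (L1 - \<phi> t) \<le> L2 - t" using c by (simp add: field_simps)
  moreover have "c * (y - x) \<le> c * (L1 - \<phi> t)" using c t xy by (intro mult_left_mono) auto
  ultimately have tend: "t + c * (y - x) \<le> L2" by linarith
  have sub: "{t<..t + c * (y - x)} \<subseteq> {\<tau>. x < \<phi> \<tau> \<and> \<phi> \<tau> \<le> y} \<inter> {0..L2}"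
  proof
    fix \<tau> assume \<tau>: "\<tau> \<in> {t<..t + c * (y - x)}"
    then have \<tau>L: "\<tau> \<le> L2" using tend by simp
    have "\<phi> \<tau> - \<phi> t \<le> (\<tau> - t) / c" using lip[of t \<tau>] t \<tau> \<tau>L by simp
    also have "\<dots> \<le> y - x" using \<tau> c by (simp add: field_simps)
    finally have "\<phi> \<tau> \<le> y" using t by simp
    then show "\<tau> \<in> {\<tau>. x < \<phi> \<tau> \<and> \<phi> \<tau> \<le> y} \<inter> {0..L2}"
      using after[of \<tau>] \<tau> \<tau>L t by auto
  qed
  have "measure lborel {t<..t + c * (y - x)} \<le> measure lborel ({\<tau>. x < \<phi> \<tau> \<and> \<phi> \<tau> \<le> y} \<inter> {0..L2})"
  proof (rule measure_mono_fmeasurable[OF sub])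
    show "{t<..t + c * (y - x)} \<in> sets lborel" by simp
    have \<phi>m[measurable]: "\<phi> \<in> borel_measurable borel" by (rule borel_measurable_continuous_onI[OF cont])
    have B: "{\<tau>. x < \<phi> \<tau> \<and> \<phi> \<tau> \<le> y} \<in> sets lborel" by measurable
    have I: "{0..L2} \<in> fmeasurable lborel" using L2 by (simp add: fmeasurable_def emeasure_lborel_Icc)
    show "{\<tau>. x < \<phi> \<tau> \<and> \<phi> \<tau> \<le> y} \<inter> {0..L2} \<in> fmeasurable lborel"
      using fmeasurable_Int_fmeasurable[OF I B] by (simp only: Int_commute)
  qed
  then show ?thesis using c xy by simp
qed

lemma emeasure_density_ind:
  assumes "S \<in> sets borel" "A \<in> sets borel"
  shows "emeasure (density lborel (indicator S)) A = emeasure lborel (S \<inter> A)"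
proof -
  have "emeasure (density lborel (indicator S)) A = (\<integral>\<^sup>+x. indicator S x * indicator A x \<partial>lborel)"
    using assms by (intro emeasure_density) auto
  also have "\<dots> = (\<integral>\<^sup>+x. indicator (S \<inter> A) x \<partial>lborel)"
    by (intro nn_integral_cong) (simp add: indicator_def)
  also have "\<dots> = emeasure lborel (S \<inter> A)" using assms by (intro nn_integral_indicator) auto
  finally show ?thesis .
qed

lemma Icc_fmeasurable: "{0..(L::real)} \<in> fmeasurable lborel"
  by (simp add: fmeasurable_def emeasure_lborel_Icc_eq)

lemma fmeas_sub: "S \<subseteq> {0..(L::real)} \<Longrightarrow> S \<in> sets borel \<Longrightarrow> S \<in> fmeasurable lborel"
  using fmeasurableI2[OF Icc_fmeasurable] by auto

lemma LI_compare:
  assumes c1: "curve \<rho>1 \<gamma>1 a b" and c2: "curve \<rho>2 \<gamma>2 a b"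
    and c: "0 < c" and k: "0 \<le> k"
    and cmp: "\<And>s t. s \<in> {a..b} \<Longrightarrow> t \<in> {a..b} \<Longrightarrow> c * \<rho>1 (\<gamma>1 s) (\<gamma>1 t) \<le> \<rho>2 (\<gamma>2 s) (\<gamma>2 t)"
    and gg: "\<And>t. t \<in> {a..b} \<Longrightarrow> ennreal k * g1 (\<gamma>1 t) \<le> g2 (\<gamma>2 t)"
    and gm: "g1 \<in> borel_measurable (borel_of (Metric_space.mtopology UNIV \<rho>1))"
  shows "ennreal (k * c) * line_integral \<rho>1 (a, b, \<gamma>1) g1 \<le> line_integral \<rho>2 (a, b, \<gamma>2) g2"
proof -
  interpret C1: curve \<rho>1 \<gamma>1 a b by (rule c1)
  interpret C2: curve \<rho>2 \<gamma>2 a b by (rule c2)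
  have ellc: "c * C1.ell u v \<le> C2.ell u v" if "a \<le> u" "u \<le> v" "v \<le> b" for u v
  proof -
    have "ennreal c * curve_length \<rho>1 \<gamma>1 u v \<le> curve_length \<rho>2 \<gamma>2 u v"
      by (rule cl_compare) (use c cmp that in auto)
    then show ?thesis using C1.cl_eq[OF that] C2.cl_eq[OF that] c C1.ell_nonneg[of u v] C2.ell_nonneg[of u v]
      by (simp add: ennreal_mult'[symmetric])
  qed
  have key: "C1.sl v - C1.sl u \<le> (C2.sl v - C2.sl u) / c" if "a \<le> u" "u \<le> v" "v \<le> b" for u v
    using ellc[OF that] C1.sl_diff[OF that] C2.sl_diff[OF that] c by (simp add: field_simps)
  define \<phi> where "\<phi> \<tau> = C1.sl (C2.us (C2.clmp \<tau>))" for \<tau>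
  have u2: "a \<le> C2.us (C2.clmp \<tau>) \<and> C2.us (C2.clmp \<tau>) \<le> b \<and> C2.sl (C2.us (C2.clmp \<tau>)) = C2.clmp \<tau>" for \<tau>
    using C2.us[OF C2.clmp(1) C2.clmp(2)] .
  have clmp_mono: "C2.clmp \<tau> \<le> C2.clmp \<tau>'" if "\<tau> \<le> \<tau>'" for \<tau> \<tau>'
    using that unfolding C2.clmp_def by auto
  have phi0: "\<phi> \<tau>' - \<phi> \<tau> \<le> (C2.clmp \<tau>' - C2.clmp \<tau>) / c \<and> \<phi> \<tau> \<le> \<phi> \<tau>'"
    if "C2.clmp \<tau> \<le> C2.clmp \<tau>'" for \<tau> \<tau>'
  proof -
    let ?u = "C2.us (C2.clmp \<tau>)" and ?v = "C2.us (C2.clmp \<tau>')"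
    have uv: "?u \<le> ?v"
    proof (rule ccontr)
      assume "\<not> ?u \<le> ?v"
      then have "C2.sl ?v \<le> C2.sl ?u" using C2.sl_mono[of ?v ?u] u2[of \<tau>] u2[of \<tau>'] by auto
      then have "C2.clmp \<tau> = C2.clmp \<tau>'" using that u2[of \<tau>] u2[of \<tau>'] by simp
      then show False using \<open>\<not> ?u \<le> ?v\<close> by simp
    qed
    have "C1.sl ?v - C1.sl ?u \<le> (C2.sl ?v - C2.sl ?u) / c" using key[of ?u ?v] u2[of \<tau>] u2[of \<tau>'] uv by simp
    moreover have "C1.sl ?u \<le> C1.sl ?v" using C1.sl_mono[of ?u ?v] u2[of \<tau>] u2[of \<tau>'] uv by simp
    ultimately show ?thesis using u2[of \<tau>] u2[of \<tau>'] unfolding \<phi>_def by simp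
  qed
  have phi_mono: "\<phi> \<tau> \<le> \<phi> \<tau>'" if "\<tau> \<le> \<tau>'" for \<tau> \<tau>'
    using phi0[OF clmp_mono[OF that]] by simp
  have phi_lip: "\<bar>\<phi> \<tau> - \<phi> \<tau>'\<bar> \<le> \<bar>\<tau> - \<tau>'\<bar> / c" for \<tau> \<tau>'
  proof -
    have *: "\<bar>\<phi> \<tau> - \<phi> \<tau>'\<bar> \<le> \<bar>\<tau> - \<tau>'\<bar> / c" if "\<tau> \<le> \<tau>'" for \<tau> \<tau>'
    proof -
      have "\<phi> \<tau>' - \<phi> \<tau> \<le> (C2.clmp \<tau>' - C2.clmp \<tau>) / c" "\<phi> \<tau> \<le> \<phi> \<tau>'"
        using phi0[OF clmp_mono[OF that]] by auto
      moreover have "(C2.clmp \<tau>' - C2.clmp \<tau>) / c \<le> \<bar>\<tau> - \<tau>'\<bar> / c"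
        using C2.clmp(3)[of \<tau>' \<tau>] c by (intro divide_right_mono) auto
      ultimately show ?thesis by simp
    qed
    show ?thesis using *[of \<tau> \<tau>'] *[of \<tau>' \<tau>] by (cases "\<tau> \<le> \<tau>'") (auto simp: abs_minus_commute)
  qed
  have phi_cont: "continuous_on UNIV \<phi>"
    unfolding continuous_on_iff
  proof (intro ballI allI impI)
    fix x e :: real assume "0 < e"
    then show "\<exists>d>0. \<forall>x'\<in>UNIV. dist x' x < d \<longrightarrow> dist (\<phi> x') (\<phi> x) < e"
    proof (intro exI[of _ "c * e"] conjI ballI impI)
      fix x' assume "dist x' x < c * e"
      then have "\<bar>x' - x\<bar> / c < e" using c by (simp add: dist_real_def field_simps)
      then show "dist (\<phi> x') (\<phi> x) < e" using phi_lip[of x' x] by (simp add: dist_real_def)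
    qed (use c in simp)
  qed
  have phi_m[measurable]: "\<phi> \<in> borel_measurable borel" by (rule borel_measurable_continuous_onI[OF phi_cont])
  have L1n: "0 \<le> C1.L" and L2n: "0 \<le> C2.L" by (rule C1.L_nonneg, rule C2.L_nonneg)
  have phi_at0: "\<phi> 0 = 0"
  proof -
    let ?u = "C2.us (C2.clmp 0)"
    have "C2.clmp 0 = 0" using C2.clmp(4)[of 0] L2n by simp
    then have "C2.sl ?u = C2.sl a" using u2[of 0] C2.sl_a by simp
    then have "C1.sl ?u - C1.sl a \<le> 0" using key[of a ?u] u2[of 0] C1.ab by simp
    moreover have "C1.sl a \<le> C1.sl ?u" using C1.sl_mono[of a ?u] u2[of 0] by simp
    ultimately show ?thesis unfolding \<phi>_def using C1.sl_a by simp
  qed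
  have phi_atL: "\<phi> C2.L = C1.L"
  proof -
    let ?u = "C2.us (C2.clmp C2.L)"
    have "C2.clmp C2.L = C2.L" using C2.clmp(4)[of C2.L] L2n by simp
    then have "C2.sl ?u = C2.sl b" using u2[of C2.L] by (simp add: C2.L_def)
    then have "C1.sl b - C1.sl ?u \<le> 0" using key[of ?u b] u2[of C2.L] C1.ab by simp
    moreover have "C1.sl ?u \<le> C1.sl b" using C1.sl_mono[of ?u b] u2[of C2.L] by simp
    ultimately show ?thesis unfolding \<phi>_def C1.L_def by simp
  qed
  have phi_range: "0 \<le> \<phi> \<tau> \<and> \<phi> \<tau> \<le> C1.L" for \<tau>
    unfolding \<phi>_def C1.L_def
    using C1.sl_mono[of a "C2.us (C2.clmp \<tau>)"] C1.sl_mono[of "C2.us (C2.clmp \<tau>)" b] u2[of \<tau>] C1.sl_a by simp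
  have pw: "ennreal k * g1 (C1.eta (\<phi> \<tau>)) \<le> g2 (C2.eta \<tau>)" for \<tau>
  proof -
    let ?u = "C2.us (C2.clmp \<tau>)"
    have "C1.clmp (\<phi> \<tau>) = \<phi> \<tau>" using C1.clmp(4) phi_range[of \<tau>] by simp
    then have e1: "C1.eta (\<phi> \<tau>) = \<gamma>1 (C1.us (\<phi> \<tau>))" unfolding C1.eta_def by simp
    have v: "a \<le> C1.us (\<phi> \<tau>) \<and> C1.us (\<phi> \<tau>) \<le> b \<and> C1.sl (C1.us (\<phi> \<tau>)) = \<phi> \<tau>"
      using C1.us phi_range[of \<tau>] by simp
    have "\<gamma>1 (C1.us (\<phi> \<tau>)) = \<gamma>1 ?u"
      by (rule C1.wd) (use v u2[of \<tau>] in \<open>auto simp: \<phi>_def\<close>)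
    then show ?thesis using gg[of ?u] u2[of \<tau>] e1 unfolding C2.eta_def by simp
  qed
  define h where "h \<sigma> = g1 (C1.eta \<sigma>)" for \<sigma>
  have h_m[measurable]: "h \<in> borel_measurable borel"
    unfolding h_def using measurable_comp[OF borel_of_measurable[OF C1.eta_cont] gm]
    by (simp add: borel_of_euclidean comp_def)
  define M1 where "M1 = density lborel (indicator {0..C1.L})"
  define M2 where "M2 = density lborel (indicator {0..C2.L})"
  define N where "N = distr M2 borel \<phi>"
  have sM1: "sets M1 = sets borel" unfolding M1_def by simp
  have sM2: "sets M2 = sets borel" unfolding M2_def by simp
  have sN: "sets N = sets borel" unfolding N_def by simp
  have phiM2[measurable]: "\<phi> \<in> measurable M2 borel" by (subst measurable_cong_sets[OF sM2 refl]) (rule phi_m)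
  have eM1: "emeasure M1 A = emeasure lborel ({0..C1.L} \<inter> A)" if "A \<in> sets borel" for A
    unfolding M1_def using that by (intro emeasure_density_ind) auto
  have eM2: "emeasure M2 A = emeasure lborel ({0..C2.L} \<inter> A)" if "A \<in> sets borel" for A
    unfolding M2_def using that by (intro emeasure_density_ind) auto
  have eN: "emeasure N A = emeasure lborel ({0..C2.L} \<inter> \<phi> -` A)" if "A \<in> sets borel" for A
  proof -
    have "emeasure N A = emeasure M2 (\<phi> -` A \<inter> space M2)" unfolding N_def using that by (intro emeasure_distr) auto
    also have "\<dots> = emeasure lborel ({0..C2.L} \<inter> \<phi> -` A)"
      using that eM2[of "\<phi> -` A"] sets_eq_imp_space_eq[OF sM2] by (simp add: measurable_sets_borel[OF phi_m])
    finally show ?thesis .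
  qed
  have fM1: "finite_measure M1"
    by (rule finite_measureI) (simp add: sets_eq_imp_space_eq[OF sM1] eM1 emeasure_lborel_Icc_eq)
  have fN: "finite_measure N"
    by (rule finite_measureI) (simp add: sets_eq_imp_space_eq[OF sN] eN emeasure_lborel_Icc_eq)
  have lipI: "\<phi> \<tau>' - \<phi> \<tau> \<le> (\<tau>' - \<tau>) / c" if "0 \<le> \<tau>" "\<tau> \<le> \<tau>'" "\<tau>' \<le> C2.L" for \<tau> \<tau>'
    using phi0[OF clmp_mono[OF that(2)]] C2.clmp(4)[of \<tau>] C2.clmp(4)[of \<tau>'] that by simp
  have iv: "c * measure M1 {x<..y} \<le> measure N {x<..y}" if "x \<le> y" for x y
  proof -
    define x' where "x' = max x 0"
    define y' where "y' = min y C1.L"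
    have m1: "measure M1 {x<..y} = measure lborel ({0..C1.L} \<inter> {x<..y})"
      by (simp add: measure_def eM1)
    have mN: "measure N {x<..y} = measure lborel ({0..C2.L} \<inter> \<phi> -` {x<..y})"
      by (simp add: measure_def eN)
    have Nn: "0 \<le> measure N {x<..y}" by simp
    show ?thesis
    proof (cases "x' \<le> y'")
      case False
      then have "{0..C1.L} \<inter> {x<..y} = {}" unfolding x'_def y'_def by auto
      then show ?thesis using m1 Nn by simp
    next
      case True
      have "measure lborel ({0..C1.L} \<inter> {x<..y}) \<le> measure lborel {x'..y'}"
        by (rule measure_mono_fmeasurable) (auto simp: x'_def y'_def fmeasurable_def emeasure_lborel_Icc_eq)
      also have "\<dots> = y' - x'" using True by simp
      finally have "c * measure M1 {x<..y} \<le> c * (y' - x')" using m1 c by (simp add: mult_left_mono)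
      also have "\<dots> \<le> measure lborel ({\<tau>. x' < \<phi> \<tau> \<and> \<phi> \<tau> \<le> y'} \<inter> {0..C2.L})"
        by (rule interval_preimage[OF phi_cont lipI c phi_at0 phi_atL L2n])
          (use True L1n in \<open>auto simp: x'_def y'_def\<close>)
      also have "\<dots> \<le> measure lborel ({0..C2.L} \<inter> \<phi> -` {x<..y})"
      proof (rule measure_mono_fmeasurable)
        show "{\<tau>. x' < \<phi> \<tau> \<and> \<phi> \<tau> \<le> y'} \<inter> {0..C2.L} \<subseteq> {0..C2.L} \<inter> \<phi> -` {x<..y}"
          unfolding x'_def y'_def by auto
        show "{\<tau>. x' < \<phi> \<tau> \<and> \<phi> \<tau> \<le> y'} \<inter> {0..C2.L} \<in> sets lborel" by measurable
        show "{0..C2.L} \<inter> \<phi> -` {x<..y} \<in> fmeasurable lborel"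
          by (rule fmeas_sub) (auto simp: measurable_sets_borel[OF phi_m])
      qed
      finally show ?thesis using mN by simp
    qed
  qed
  have "ennreal c * (\<integral>\<^sup>+\<sigma>. h \<sigma> \<partial>M1) \<le> (\<integral>\<^sup>+\<sigma>. h \<sigma> \<partial>N)"
    by (rule nn_integral_compare[OF sM1 sN fM1 fN _ iv h_m]) (use c in auto)
  moreover have "(\<integral>\<^sup>+\<sigma>. h \<sigma> \<partial>M1) = line_integral \<rho>1 (a, b, \<gamma>1) g1"
    unfolding M1_def C1.line_integral_eq h_def
    by (subst nn_integral_density) (auto simp: mult.commute h_def[symmetric])
  moreover have "(\<integral>\<^sup>+\<sigma>. h \<sigma> \<partial>N) = (\<integral>\<^sup>+\<tau>. h (\<phi> \<tau>) * indicator {0..C2.L} \<tau> \<partial>lborel)"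
    unfolding N_def M2_def
    by (subst nn_integral_distr) (auto simp: nn_integral_density mult.commute)
  moreover have "ennreal k * (\<integral>\<^sup>+\<tau>. h (\<phi> \<tau>) * indicator {0..C2.L} \<tau> \<partial>lborel) \<le> line_integral \<rho>2 (a, b, \<gamma>2) g2"
  proof -
    have "ennreal k * (\<integral>\<^sup>+\<tau>. h (\<phi> \<tau>) * indicator {0..C2.L} \<tau> \<partial>lborel)
        = (\<integral>\<^sup>+\<tau>. ennreal k * (h (\<phi> \<tau>) * indicator {0..C2.L} \<tau>) \<partial>lborel)"
      by (rule nn_integral_cmult[symmetric]) simp
    also have "\<dots> \<le> (\<integral>\<^sup>+\<tau>. g2 (C2.eta \<tau>) * indicator {0..C2.L} \<tau> \<partial>lborel)"
      by (intro nn_integral_mono) (auto simp: indicator_def h_def pw mult.assoc[symmetric])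
    finally show ?thesis by (simp add: C2.line_integral_eq)
  qed
  ultimately show ?thesis using c k
    by (smt (verit) ennreal_mult' mult.assoc mult.commute mult_left_mono order_trans zero_le)
qed



lemma cs_concat: "xs \<noteq> [] \<Longrightarrow> ys \<noteq> [] \<Longrightarrow> last xs = hd ys \<Longrightarrow> cs f (xs @ tl ys) = cs f xs + cs f ys"
proof -
  assume xs: "xs \<noteq> []" and ys: "ys \<noteq> []" and e: "last xs = hd ys"
  define y where "y = hd ys"
  have 1: "xs = butlast xs @ [y]" using xs e append_butlast_last_id[of xs] by (simp add: y_def)
  have 2: "ys = y # tl ys" using ys hd_Cons_tl[of ys] by (simp add: y_def)
  have "cs f (xs @ tl ys) = cs f (butlast xs @ y # tl ys)" using 1 by (metis append_Cons append_assoc self_append_conv2)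
  also have "\<dots> = cs f xs + cs f ys" using cs_append[of f "butlast xs" y "tl ys"] 1 2 by simp
  finally show ?thesis .
qed

lemma cs_rev: "(\<And>u v. f u v = f v u) \<Longrightarrow> cs f (rev xs) = cs f xs"
proof (induction xs rule: induct_list012)
  case (3 x y zs)
  have "cs f (rev (x # y # zs)) = cs f (rev zs @ y # [x])" by simp
  also have "\<dots> = cs f (rev zs @ [y]) + cs f [y, x]" by (rule cs_append)
  also have "\<dots> = cs f (y # zs) + f x y" using 3 by simp
  finally show ?case by simp
qed auto

definition ha :: "'a::metric_space \<Rightarrow> 'a option \<Rightarrow> real" where
  "ha a u = (case u of None \<Rightarrow> 0 | Some x \<Rightarrow> 1 / (1 + dist x a))"

definition chn :: "'b \<Rightarrow> 'b \<Rightarrow> 'b list set" where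
  "chn x y = {xs. 2 \<le> length xs \<and> hd xs = x \<and> last xs = y}"

lemma sph_dist_cs: "sph_dist a x y = (INF xs\<in>chn x y. cs (sph_da a) xs)"
  by (simp add: sph_dist_def chn_def cs_def)

lemma sph_da_nonneg: "0 \<le> sph_da a u v"
  by (auto simp: sph_da_def split: option.splits)

lemma sph_da_sym: "sph_da a u v = sph_da a v u"
  by (auto simp: sph_da_def dist_commute mult.commute split: option.splits)

lemma sph_da_refl: "sph_da a u u = 0"
  by (auto simp: sph_da_def split: option.splits)

lemma sph_da_ha: "\<bar>ha a u - ha a v\<bar> \<le> sph_da a u v"
proof (cases u; cases v)
  fix x y assume uv: "u = Some x" "v = Some y"
  have px: "0 < 1 + dist x a" and py: "0 < 1 + dist y a" by (simp_all add: add_pos_nonneg)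
  have "\<bar>1 / (1 + dist x a) - 1 / (1 + dist y a)\<bar> = \<bar>dist y a - dist x a\<bar> / ((1 + dist x a) * (1 + dist y a))"
    using px py by (simp add: field_simps abs_div)
  also have "\<dots> \<le> dist x y / ((1 + dist x a) * (1 + dist y a))"
    using px py dist_triangle[of y a x] dist_triangle[of x a y]
    by (intro divide_right_mono) (auto simp: dist_commute abs_le_iff)
  finally show ?thesis using uv by (simp add: ha_def sph_da_def)
qed (auto simp: ha_def sph_da_def)

lemma cs_nonneg_sph: "0 \<le> cs (sph_da a) xs"
  by (rule cs_nonneg) (rule sph_da_nonneg)

lemma chn_ne: "[x, y] \<in> chn x y" by (simp add: chn_def)

lemma sph_dist_le_da: "sph_dist a x y \<le> sph_da a x y"
  unfolding sph_dist_cs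
  by (rule cINF_lower2[OF _ chn_ne]) (auto intro: bdd_belowI[of _ 0] cs_nonneg_sph)

lemma sph_dist_ge: "(\<And>xs. xs \<in> chn x y \<Longrightarrow> m \<le> cs (sph_da a) xs) \<Longrightarrow> m \<le> sph_dist a x y"
  unfolding sph_dist_cs by (rule cINF_greatest) (use chn_ne[of x y] in auto)

lemma sph_dist_nonneg: "0 \<le> sph_dist a x y"
  by (rule sph_dist_ge) (rule cs_nonneg_sph)

lemma sph_dist_le_chain: "xs \<in> chn x y \<Longrightarrow> sph_dist a x y \<le> cs (sph_da a) xs"
  unfolding sph_dist_cs by (rule cINF_lower) (auto intro: bdd_belowI[of _ 0] cs_nonneg_sph)

lemma sph_dist_refl: "sph_dist a x x = 0"
  using sph_dist_le_da[of a x x] sph_dist_nonneg[of a x x] by (simp add: sph_da_refl)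

lemma sph_dist_sym: "sph_dist a x y = sph_dist a y x"
proof -
  have *: "sph_dist a x y \<le> sph_dist a y x" for x y
  proof (rule sph_dist_ge)
    fix xs assume xs: "xs \<in> chn y x"
    then have "rev xs \<in> chn x y" by (auto simp: chn_def hd_rev last_rev)
    then have "sph_dist a x y \<le> cs (sph_da a) (rev xs)" by (rule sph_dist_le_chain)
    then show "sph_dist a x y \<le> cs (sph_da a) xs" using cs_rev[of "sph_da a" xs] sph_da_sym by metis
  qed
  show ?thesis using *[of x y] *[of y x] by simp
qed

lemma sph_dist_tri: "sph_dist a x z \<le> sph_dist a x y + sph_dist a y z"
proof -
  have "sph_dist a x z \<le> cs (sph_da a) xs + cs (sph_da a) ys" if "xs \<in> chn x y" "ys \<in> chn y z" for xs ys
  proof -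
    have "xs @ tl ys \<in> chn x z" using that
      by (cases ys) (auto simp: chn_def hd_append)
    moreover have "cs (sph_da a) (xs @ tl ys) = cs (sph_da a) xs + cs (sph_da a) ys"
      using that by (intro cs_concat) (auto simp: chn_def)
    ultimately show ?thesis using sph_dist_le_chain by metis
  qed
  then have "sph_dist a x z - cs (sph_da a) ys \<le> sph_dist a x y" if "ys \<in> chn y z" for ys
    using that by (intro sph_dist_ge) (auto simp: algebra_simps)
  then have "sph_dist a x z - sph_dist a x y \<le> sph_dist a y z"
    by (intro sph_dist_ge) (auto simp: algebra_simps)
  then show ?thesis by simp
qed

lemma cs_ha: "z \<in> set xs \<Longrightarrow> \<bar>ha a (hd xs) - ha a z\<bar> \<le> cs (sph_da a) xs"
proof (induction xs rule: induct_list012)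
  case (3 x y zs)
  show ?case
  proof (cases "z = x")
    case True then show ?thesis using cs_nonneg_sph[of a "x # y # zs"] by simp
  next
    case False
    then have "z \<in> set (y # zs)" using 3 by simp
    then have "\<bar>ha a y - ha a z\<bar> \<le> cs (sph_da a) (y # zs)" using "3.IH"(2) by simp
    moreover have "\<bar>ha a x - ha a y\<bar> \<le> sph_da a x y" by (rule sph_da_ha)
    ultimately show ?thesis by simp
  qed
qed auto

lemma cs_ball:
  assumes "0 \<le> Mr"
  shows "(\<forall>z\<in>set xs. \<exists>w. z = Some w \<and> dist w a \<le> Mr) \<Longrightarrow> xs \<noteq> [] \<Longrightarrow>
    dist (the (hd xs)) (the (last xs)) / (1 + Mr)^2 \<le> cs (sph_da a) xs"
proof (induction xs rule: induct_list012)
  case (3 x y zs)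
  obtain x' y' where xy: "x = Some x'" "y = Some y'" "dist x' a \<le> Mr" "dist y' a \<le> Mr" using "3.prems" by auto
  have IH: "dist y' (the (last (y # zs))) / (1 + Mr)^2 \<le> cs (sph_da a) (y # zs)"
    using "3.IH"(2) "3.prems" xy by simp
  have "(1 + dist x' a) * (1 + dist y' a) \<le> (1 + Mr)^2"
    using xy assms by (simp add: power2_eq_square mult_mono add_nonneg_nonneg)
  moreover have "0 < (1 + dist x' a) * (1 + dist y' a)" by (simp add: add_pos_nonneg)
  moreover have "0 < (1 + Mr)^2" using assms by simp
  ultimately have "dist x' y' / (1 + Mr)^2 \<le> dist x' y' / ((1 + dist x' a) * (1 + dist y' a))"
    by (intro divide_left_mono) auto
  then have "dist x' y' / (1 + Mr)^2 \<le> sph_da a x y"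
    using xy by (simp add: sph_da_def)
  moreover have "dist x' (the (last (y # zs))) \<le> dist x' y' + dist y' (the (last (y # zs)))"
    by (rule dist_triangle)
  ultimately have "dist x' (the (last (y # zs))) / (1 + Mr)^2 \<le> sph_da a x y + cs (sph_da a) (y # zs)"
    using IH by (smt (verit, ccfv_SIG) add_divide_distrib divide_right_mono zero_le_power2)
  then show ?case using xy by simp
qed auto

lemma sph_lower:
  assumes R: "0 \<le> R" "dist x a \<le> R"
  shows "min (dist x y / (2 * R + 2)^2) (1 / (2 * R + 2)) \<le> sph_dist a (Some x) (Some y)"
proof (rule sph_dist_ge)
  fix xs assume xs: "xs \<in> chn (Some x) (Some y)"
  then have ne: "xs \<noteq> []" and hx: "hd xs = Some x" and ly: "last xs = Some y" by (auto simp: chn_def)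
  show "min (dist x y / (2 * R + 2)^2) (1 / (2 * R + 2)) \<le> cs (sph_da a) xs"
  proof (cases "\<forall>z\<in>set xs. \<exists>w. z = Some w \<and> dist w a \<le> 2 * R + 1")
    case True
    then have "dist x y / (1 + (2 * R + 1))^2 \<le> cs (sph_da a) xs"
      using cs_ball[of "2 * R + 1" xs a] R ne hx ly by simp
    then show ?thesis by (simp add: add.commute)
  next
    case False
    then obtain z where z: "z \<in> set xs" "z = None \<or> (\<exists>w. z = Some w \<and> 2 * R + 1 < dist w a)"
      by (metis not_le option.exhaust)
    have "ha a z \<le> 1 / (2 * R + 2)"
    proof (cases z)
      case None then show ?thesis using R by (simp add: ha_def)
    next
      case (Some w)
      then have "2 * R + 1 < dist w a" using z by auto
      then show ?thesis using Some R by (simp add: ha_def frac_le)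
    qed
    moreover have "1 / (R + 1) \<le> ha a (Some x)" unfolding ha_def using R
      by (simp add: add.commute) (intro divide_left_mono, auto simp: add_pos_nonneg)
    moreover have "1 / (R + 1) - 1 / (2 * R + 2) = 1 / (2 * R + 2)" using R by (simp add: field_simps)
    moreover have "\<bar>ha a (hd xs) - ha a z\<bar> \<le> cs (sph_da a) xs" by (rule cs_ha[OF z(1)])
    ultimately show ?thesis using hx by (simp add: min.coboundedI2)
  qed
qed

lemma sph_lower_None: "1 / (1 + dist x a) \<le> sph_dist a (Some x) None"
proof (rule sph_dist_ge)
  fix xs assume xs: "xs \<in> chn (Some x) None"
  then have ne: "xs \<noteq> []" by (cases xs) (auto simp: chn_def)
  then have "None \<in> set xs" "hd xs = Some x" using xs unfolding chn_def using last_in_set[of xs] by auto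
  then show "1 / (1 + dist x a) \<le> cs (sph_da a) xs" using cs_ha[of None xs a] by (simp add: ha_def)
qed

lemma sph_upper: "sph_dist a (Some x) (Some y) \<le> dist x y"
proof -
  have D: "1 \<le> (1 + dist x a) * (1 + dist y a)"
    using mult_mono[of 1 "1 + dist x a" 1 "1 + dist y a"] by simp
  have "dist x y / ((1 + dist x a) * (1 + dist y a)) \<le> dist x y / 1"
    by (rule divide_left_mono) (use D in auto)
  then have "sph_da a (Some x) (Some y) \<le> dist x y" by (simp add: sph_da_def)
  then show ?thesis using sph_dist_le_da[of a "Some x" "Some y"] by simp
qed



lemma sph_metric: "Metric_space UNIV (sph_dist a)"
proof
  fix x y z :: "'a option"
  show "0 \<le> sph_dist a x y" by (rule sph_dist_nonneg)
  show "sph_dist a x y = sph_dist a y x" by (rule sph_dist_sym)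
  show "sph_dist a x z \<le> sph_dist a x y + sph_dist a y z" by (rule sph_dist_tri)
  show "sph_dist a x y = 0 \<longleftrightarrow> x = y"
  proof
    assume 0: "sph_dist a x y = 0"
    show "x = y"
    proof (cases x; cases y)
      fix x' y' assume xy: "x = Some x'" "y = Some y'"
      have p: "0 < 2 * dist x' a + 2" using zero_le_dist[of x' a] by linarith
      have "min (dist x' y' / (2 * dist x' a + 2)^2) (1 / (2 * dist x' a + 2)) \<le> 0"
        using sph_lower[of "dist x' a" x' a y'] 0 xy by simp
      moreover have "0 < 1 / (2 * dist x' a + 2)" using p by simp
      moreover have "0 < (2 * dist x' a + 2)^2" using p by simp
      ultimately have "dist x' y' \<le> 0" by (simp add: min_le_iff_disj divide_le_0_iff)
      then show "x = y" using xy by simp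
    next
      fix x' assume xy: "x = Some x'" "y = None"
      then show "x = y" using sph_lower_None[of x' a] 0 zero_le_dist[of x' a] by (simp add: field_simps)
    next
      fix y' assume xy: "x = None" "y = Some y'"
      then show "x = y" using sph_lower_None[of y' a] 0 sph_dist_sym[of a x y] zero_le_dist[of y' a] by (simp add: field_simps)
    qed simp
  qed (simp add: sph_dist_refl)
qed

context
  fixes a :: "'a::metric_space"
begin

interpretation S: Metric_space UNIV "sph_dist a" by (rule sph_metric)

lemma Some_cont: "continuous_map euclidean (Metric_space.mtopology UNIV (sph_dist a)) Some"
  unfolding S.continuous_map_to_metric
proof (intro ballI allI impI)
  fix x :: 'a and e :: real assume e: "0 < e"
  have "\<forall>y\<in>ball x e. Some y \<in> S.mball (Some x) e"
  proof
    fix y assume "y \<in> ball x e"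
    then have "dist x y < e" by simp
    then have "sph_dist a (Some x) (Some y) < e" using sph_upper[of a x y] by linarith
    then show "Some y \<in> S.mball (Some x) e" by simp
  qed
  then show "\<exists>U. openin euclidean U \<and> x \<in> U \<and> (\<forall>y\<in>U. Some y \<in> S.mball (Some x) e)"
    using e by (intro exI[of _ "ball x e"]) auto
qed

lemma Some_open: "open U \<Longrightarrow> openin (Metric_space.mtopology UNIV (sph_dist a)) (Some ` U)"
  unfolding S.openin_mtopology
proof (intro conjI ballI allI impI)
  fix z assume U: "open U" and z: "z \<in> Some ` U"
  then obtain x where x: "z = Some x" "x \<in> U" by auto
  then obtain r0 where r0: "r0 > 0" "ball x r0 \<subseteq> U" using U open_contains_ball by blast
  define R where "R = dist x a"
  have R: "0 \<le> R" "dist x a \<le> R" unfolding R_def by auto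
  define r where "r = min (r0 / (2 * R + 2)^2) (1 / (2 * R + 2))"
  have pos: "0 < 2 * R + 2" using R by simp
  have r: "r > 0" unfolding r_def using r0 pos by simp
  have "S.mball z r \<subseteq> Some ` U"
  proof
    fix w assume "w \<in> S.mball z r"
    then have w: "sph_dist a (Some x) w < r" using x by simp
    show "w \<in> Some ` U"
    proof (cases w)
      case None
      have "1 / (2 * R + 2) \<le> 1 / (1 + R)" using R by (intro divide_left_mono) (auto simp: add_pos_nonneg)
      moreover have "r \<le> 1 / (2 * R + 2)" unfolding r_def by simp
      moreover have "sph_dist a (Some x) None < r" using w None by simp
      moreover have "1 / (1 + R) \<le> sph_dist a (Some x) None" using sph_lower_None[of x a] unfolding R_def .
      ultimately show ?thesis by linarith
    next
      case (Some y)
      have lo: "min (dist x y / (2 * R + 2)^2) (1 / (2 * R + 2)) \<le> sph_dist a (Some x) (Some y)"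
        by (rule sph_lower[OF R])
      have "dist x y / (2 * R + 2)^2 < r0 / (2 * R + 2)^2"
        using lo w Some unfolding r_def by (auto simp: min_def split: if_splits)
      moreover have "0 < (2 * R + 2)^2" using pos by simp
      ultimately have "dist x y < r0" by (simp add: divide_less_cancel)
      then show ?thesis using Some r0 by (auto simp: dist_commute)
    qed
  qed
  then show "\<exists>r>0. S.mball z r \<subseteq> Some ` U" using r by blast
qed simp

abbreviation "That \<equiv> Metric_space.mtopology UNIV (sph_dist a)"

lemma sets_borel_of_That: "sets (borel_of That) = sigma_sets UNIV {U. openin That U}"
  unfolding borel_of_def by (simp add: sets_measure_of_conv openin_subset subset_eq)

lemma space_borel_of_That: "space (borel_of That) = UNIV"
  unfolding borel_of_def by (simp add: space_measure_of_conv)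

lemma None_sets: "{None} \<in> sets (borel_of That)"
proof -
  have "Some ` UNIV \<in> sigma_sets UNIV {U. openin That U}" using Some_open[of UNIV] by auto
  then have "UNIV - Some ` UNIV \<in> sigma_sets UNIV {U. openin That U}" by (rule sigma_sets.Compl)
  moreover have "UNIV - Some ` UNIV = {None :: 'a option}" by (auto simp: notin_range_Some)
  ultimately show ?thesis by (simp add: sets_borel_of_That)
qed

lemma the_meas: "the \<in> borel_measurable (borel_of That)"
proof (rule borel_measurableI)
  fix S :: "'a set" assume S: "open S"
  have "the -` S = Some ` S \<union> (if the None \<in> S then {None} else {})"
  proof (rule set_eqI)
    fix u :: "'a option" show "u \<in> the -` S \<longleftrightarrow> u \<in> Some ` S \<union> (if the None \<in> S then {None} else {})"
      by (cases u) auto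
  qed
  moreover have "Some ` S \<in> sets (borel_of That)" using Some_open[OF S] by (simp add: sets_borel_of_That)
  moreover have "insert None (Some ` S) = {None} \<union> Some ` S" by blast
  ultimately show "the -` S \<inter> space (borel_of That) \<in> sets (borel_of That)"
    using None_sets sets.Un[OF None_sets \<open>Some ` S \<in> sets (borel_of That)\<close>]
    by (simp add: space_borel_of_That)
qed

lemma case_meas:
  assumes "G \<in> borel_measurable borel"
  shows "(\<lambda>u. case u of None \<Rightarrow> c | Some x \<Rightarrow> G x) \<in> borel_measurable (borel_of That)"
proof -
  have N: "{None} \<inter> space (borel_of That) \<in> sets (borel_of That)"
    using None_sets unfolding space_borel_of_That by simp
  have "(\<lambda>u. if u \<in> {None} then c else G (the u)) \<in> borel_measurable (borel_of That)"
    by (rule measurable_If_set[OF _ measurable_comp[OF the_meas assms, unfolded comp_def] N]) simp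
  moreover have "(\<lambda>u. if u \<in> {None} then c else G (the u)) = (\<lambda>u. case u of None \<Rightarrow> c | Some x \<Rightarrow> G x)"
    by (auto split: option.splits)
  ultimately show ?thesis by simp
qed

end



lemma Some_meas_mu: "space \<mu> = UNIV \<Longrightarrow> Some \<in> measurable \<mu> (sigma UNIV {A. Some -` A \<in> sets \<mu>})"
  by (rule measurable_measure_of) auto

lemma transfer_meas:
  fixes \<mu> :: "'a::metric_space measure"
  assumes sp: "space \<mu> = UNIV" and bs: "sets borel \<subseteq> sets \<mu>"
    and f: "f \<in> borel_measurable (borel_of (That a))"
  shows "f \<in> borel_measurable (sigma UNIV {A. Some -` A \<in> sets \<mu>})"
proof -
  have "id \<in> measurable (sigma UNIV {A. Some -` A \<in> sets \<mu>}) (borel_of (That a))"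
    unfolding borel_of_def
  proof (rule measurable_measure_of)
    show "{U. openin (That a) U} \<subseteq> Pow (topspace (That a))" by (auto dest: openin_subset)
    show "id \<in> space (sigma UNIV {A. Some -` A \<in> sets \<mu>}) \<rightarrow> topspace (That a)"
      by (simp add: Metric_space.topspace_mtopology[OF sph_metric])
    fix U assume "U \<in> {U. openin (That a) U}"
    then have "openin euclidean {x \<in> topspace euclidean. Some x \<in> U}"
      using Some_cont[of a] by (simp add: continuous_map_def)
    then have "open (Some -` U)" by (simp add: vimage_def)
    then have "Some -` U \<in> sets \<mu>" using bs by auto
    then show "id -` U \<inter> space (sigma UNIV {A. Some -` A \<in> sets \<mu>}) \<in> sets (sigma UNIV {A. Some -` A \<in> sets \<mu>})"
      by (simp add: sigma_sets.Basic)
  qed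
  from measurable_comp[OF this f] show ?thesis by (simp add: comp_def)
qed

lemma sph_integral:
  fixes \<mu> :: "'a::metric_space measure"
  assumes sp: "space \<mu> = UNIV" and bs: "sets borel \<subseteq> sets \<mu>"
    and F: "F \<in> borel_measurable (borel_of (That a))"
  shows "(\<integral>\<^sup>+u. F u \<partial>sph_measure \<mu> a q) = (\<integral>\<^sup>+x. ennreal (1 / (1 + dist x a) powr q) * F (Some x) \<partial>\<mu>)"
proof -
  let ?M = "sigma UNIV {A. Some -` A \<in> sets \<mu>}"
  let ?w = "\<lambda>y. case y of None \<Rightarrow> 0 | Some x \<Rightarrow> ennreal (1 / (1 + dist x a) powr q)"
  have sD: "sets (distr \<mu> ?M Some) = sets ?M" by simp
  have wm: "?w \<in> borel_measurable ?M"
  proof (rule transfer_meas[OF sp bs case_meas])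
    have d: "(\<lambda>x::'a. dist x a) \<in> borel_measurable borel"
      by (intro borel_measurable_continuous_onI continuous_intros)
    show "(\<lambda>x. ennreal (1 / (1 + dist x a) powr q)) \<in> borel_measurable borel" by measurable (simp_all add: d)
  qed
  have Fm: "F \<in> borel_measurable ?M" by (rule transfer_meas[OF sp bs F])
  have wm': "?w \<in> borel_measurable (distr \<mu> ?M Some)" by (subst measurable_cong_sets[OF sD refl]) (rule wm)
  have Fm': "F \<in> borel_measurable (distr \<mu> ?M Some)" by (subst measurable_cong_sets[OF sD refl]) (rule Fm)
  have wFm: "(\<lambda>u. ?w u * F u) \<in> borel_measurable (distr \<mu> ?M Some)" using wm' Fm' by (rule borel_measurable_times_ennreal)
  have "(\<integral>\<^sup>+u. F u \<partial>sph_measure \<mu> a q) = (\<integral>\<^sup>+u. ?w u * F u \<partial>distr \<mu> ?M Some)"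
    unfolding sph_measure_def by (rule nn_integral_density[OF wm' Fm'])
  also have "\<dots> = (\<integral>\<^sup>+x. ?w (Some x) * F (Some x) \<partial>\<mu>)"
    by (rule nn_integral_distr[OF Some_meas_mu[OF sp] wFm])
  finally show ?thesis by simp
qed

lemma ennpow_meas:
  assumes f[measurable]: "f \<in> borel_measurable M"
  shows "(\<lambda>x. ennpow (f x) p) \<in> borel_measurable M"
  unfolding ennpow_def by measurable

lemma ennpow_mult:
  assumes K: "0 < K"
  shows "ennpow (g * ennreal K) p = ennpow g p * ennreal (K powr p)"
proof (cases g rule: ennreal_cases)
  case (real r)
  have "g * ennreal K = ennreal (r * K)" using real K by (simp add: ennreal_mult'')
  then have "ennpow (g * ennreal K) p = ennreal ((r * K) powr p)"
    using real K by (simp add: ennpow_def)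
  also have "\<dots> = ennreal (r powr p * K powr p)" using real K by (simp add: powr_mult)
  also have "\<dots> = ennreal (r powr p) * ennreal (K powr p)" by (rule ennreal_mult) auto
  also have "ennreal (r powr p) = ennpow g p" using real by (simp add: ennpow_def)
  finally show ?thesis .
next
  case top
  have "ennreal (K powr p) \<noteq> 0" using K by simp
  then show ?thesis using top K by (simp add: ennpow_def)
qed



lemma metX: "Metric_space UNIV (dist :: 'a::metric_space \<Rightarrow> 'a \<Rightarrow> real)"
  by (rule Met_TC.Metric_space_axioms)

lemma curve_facts:
  fixes \<gamma> :: "real \<Rightarrow> 'a::metric_space"
  assumes "rectifiable_curve UNIV dist (t0, t1, \<gamma>)"
  shows "curve dist \<gamma> t0 t1" "curve (sph_dist a) (Some \<circ> \<gamma>) t0 t1"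
    "\<exists>R\<ge>0. \<forall>t\<in>{t0..t1}. dist (\<gamma> t) a \<le> R"
proof -
  have t: "t0 \<le> t1" and ct: "continuous_on {t0..t1} \<gamma>" and fin: "curve_length dist \<gamma> t0 t1 < \<infinity>"
    using assms by (auto simp: rectifiable_curve_def compact_curve_def)
  show C1: "curve dist \<gamma> t0 t1"
    unfolding curve_def using metX t ct fin by simp
  have cS: "continuous_map (top_of_set {t0..t1}) (That a) (Some \<circ> \<gamma>)"
    using continuous_map_compose[of "top_of_set {t0..t1}" euclidean \<gamma> "That a" Some] ct Some_cont[of a] by simp
  have "ennreal 1 * curve_length (sph_dist a) (Some \<circ> \<gamma>) t0 t1 \<le> curve_length dist \<gamma> t0 t1"
    by (rule cl_compare) (simp_all add: sph_upper)
  then have "curve_length (sph_dist a) (Some \<circ> \<gamma>) t0 t1 < \<infinity>" using fin by simp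
  then show "curve (sph_dist a) (Some \<circ> \<gamma>) t0 t1"
    unfolding curve_def using sph_metric[of a] t cS by simp
  have "compact (\<gamma> ` {t0..t1})" using ct by (intro compact_continuous_image) auto
  then have "bounded (\<gamma> ` {t0..t1})" by (rule compact_imp_bounded)
  then obtain e where e: "\<forall>y\<in>\<gamma> ` {t0..t1}. dist a y \<le> e" unfolding bounded_any_center[of _ a] by blast
  show "\<exists>R\<ge>0. \<forall>t\<in>{t0..t1}. dist (\<gamma> t) a \<le> R"
    using e by (intro exI[of _ "max e 0"]) (auto simp: dist_commute intro: le_max_iff_disj[THEN iffD2])
qed

lemma ennreal_pos_mult_top: "0 < c \<Longrightarrow> ennreal c * x \<le> y \<Longrightarrow> x = \<infinity> \<Longrightarrow> y = \<infinity>"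
  by (simp add: top_unique)

theorem lemma6p1:
  fixes \<mu> :: "'a::complete_space measure" and p q s Cs :: real and a :: 'a
    and \<Gamma> :: "'a curve set"
  assumes "1 \<le> p"
    and "\<not> bounded (UNIV :: 'a set)"
    and "space \<mu> = UNIV" and "sets borel \<subseteq> sets \<mu>" and "complete_measure_cond \<mu>"
    and "\<forall>x r. r > 0 \<longrightarrow> 0 < emeasure \<mu> (ball x r) \<and> emeasure \<mu> (ball x r) < \<infinity>"
    and "doubling \<mu>" and "p_poincare \<mu> p"
    and "s > 0" and "Cs > 0"
    and "\<forall>r R. 1 \<le> r \<and> r \<le> R \<longrightarrow> Cs * (r / R) powr s \<le> measure \<mu> (ball a r) / measure \<mu> (ball a R)"
    and "annularly_connected a"
    and "q > s"
    and "\<forall>c\<in>\<Gamma>. rectifiable_curve UNIV dist c"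
  shows "zero_p_modulus UNIV dist \<mu> p \<Gamma> \<longleftrightarrow>
         zero_p_modulus UNIV (sph_dist a) (sph_measure \<mu> a q) p
           ((\<lambda>(t0, t1, \<gamma>). (t0, t1, Some \<circ> \<gamma>)) ` \<Gamma>)"
proof
  have sp: "space \<mu> = UNIV" and bs: "sets borel \<subseteq> sets \<mu>" using assms by auto
  have q0: "0 < q" using assms by linarith
  have p0: "0 < p" using assms by linarith
  have borelX: "borel_of (Metric_space.mtopology UNIV (dist :: 'a \<Rightarrow> 'a \<Rightarrow> real)) = borel"
    by (simp add: borel_of_euclidean)
  have wpos: "0 < 1 + dist x a" for x :: 'a using zero_le_dist[of x a] by linarith
  {
    assume "zero_p_modulus UNIV dist \<mu> p \<Gamma>"
    then obtain g where gm: "g \<in> borel_measurable (borel_of (Metric_space.mtopology UNIV dist))"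
      and gi: "(\<integral>\<^sup>+ x. ennpow (g x) p \<partial>\<mu>) < \<infinity>"
      and gl: "\<forall>c\<in>\<Gamma>. line_integral dist c g = \<infinity>"
      unfolding zero_p_modulus_def by blast
    have gB[measurable]: "g \<in> borel_measurable borel" using gm borelX by simp
    define K where "K x = (1 + dist x a) powr (q / p)" for x
    have Km: "(\<lambda>x. ennreal (K x)) \<in> borel_measurable borel"
    proof -
      have d: "(\<lambda>x::'a. dist x a) \<in> borel_measurable borel"
        by (intro borel_measurable_continuous_onI continuous_intros)
      show ?thesis unfolding K_def by measurable (simp_all add: d)
    qed
    define gh where "gh u = (case u of None \<Rightarrow> 0 | Some x \<Rightarrow> g x * ennreal (K x))" for u
    have ghm: "gh \<in> borel_measurable (borel_of (That a))"
      unfolding gh_def by (rule case_meas) (use Km in measurable)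
    have "(\<integral>\<^sup>+u. ennpow (gh u) p \<partial>sph_measure \<mu> a q)
        = (\<integral>\<^sup>+x. ennreal (1 / (1 + dist x a) powr q) * ennpow (gh (Some x)) p \<partial>\<mu>)"
      by (rule sph_integral[OF sp bs ennpow_meas[OF ghm]])
    also have "\<dots> = (\<integral>\<^sup>+x. ennpow (g x) p \<partial>\<mu>)"
    proof (intro nn_integral_cong)
      fix x :: 'a
      have Kp: "0 < K x" unfolding K_def using wpos[of x] by simp
      have "K x powr p = (1 + dist x a) powr q" unfolding K_def using p0 by (simp add: powr_powr)
      then have "ennreal (1 / (1 + dist x a) powr q) * ennreal (K x powr p) = 1"
        using wpos[of x] by (simp add: ennreal_mult[symmetric])
      then show "ennreal (1 / (1 + dist x a) powr q) * ennpow (gh (Some x)) p = ennpow (g x) p"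
        unfolding gh_def using ennpow_mult[OF Kp, of "g x" p]
        by (simp add: mult.commute mult.left_commute)
    qed
    finally have ghi: "(\<integral>\<^sup>+u. ennpow (gh u) p \<partial>sph_measure \<mu> a q) < \<infinity>" using gi by simp
    have ghl: "\<forall>c\<in>(\<lambda>(t0, t1, \<gamma>). (t0, t1, Some \<circ> \<gamma>)) ` \<Gamma>. line_integral (sph_dist a) c gh = \<infinity>"
    proof
      fix c' assume "c' \<in> (\<lambda>(t0, t1, \<gamma>). (t0, t1, Some \<circ> \<gamma>)) ` \<Gamma>"
      then obtain t0 t1 \<gamma> where c: "(t0, t1, \<gamma>) \<in> \<Gamma>" and c': "c' = (t0, t1, Some \<circ> \<gamma>)" by auto
      have rc: "rectifiable_curve UNIV dist (t0, t1, \<gamma>)" using assms(14) c by blast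
      have cf1: "curve dist \<gamma> t0 t1" by (rule curve_facts(1)[OF rc])
      have cf2: "curve (sph_dist a) (Some \<circ> \<gamma>) t0 t1" by (rule curve_facts(2)[OF rc])
      have cf3: "\<exists>R\<ge>0. \<forall>t\<in>{t0..t1}. dist (\<gamma> t) a \<le> R" by (rule curve_facts(3)[OF rc])
      obtain R where R: "0 \<le> R" "\<forall>t\<in>{t0..t1}. dist (\<gamma> t) a \<le> R" using cf3 by blast
      define cc where "cc = 1 / (2 * R + 2)^2"
      have cc: "0 < cc" unfolding cc_def using R by simp
      have "ennreal (1 * cc) * line_integral dist (t0, t1, \<gamma>) g \<le> line_integral (sph_dist a) (t0, t1, Some \<circ> \<gamma>) gh"
      proof (rule LI_compare[OF cf1 cf2 cc _ _ _ gm])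
        show "(0::real) \<le> 1" by simp
        fix s t assume st: "s \<in> {t0..t1}" "t \<in> {t0..t1}"
        have lo: "min (dist (\<gamma> s) (\<gamma> t) / (2 * R + 2)^2) (1 / (2 * R + 2)) \<le> sph_dist a (Some (\<gamma> s)) (Some (\<gamma> t))"
          using sph_lower[of R "\<gamma> s" a "\<gamma> t"] R st by auto
        have "dist (\<gamma> s) a \<le> R" "dist (\<gamma> t) a \<le> R" using R st by auto
        then have "dist (\<gamma> s) (\<gamma> t) \<le> 2 * R + 2"
          using dist_triangle[of "\<gamma> s" "\<gamma> t" a] by (simp add: dist_commute)
        then have "dist (\<gamma> s) (\<gamma> t) / (2 * R + 2)^2 \<le> (2 * R + 2) / (2 * R + 2)^2"
          using R by (intro divide_right_mono) auto
        also have "\<dots> = 1 / (2 * R + 2)" using R by (simp add: power2_eq_square)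
        finally show "cc * dist (\<gamma> s) (\<gamma> t) \<le> sph_dist a ((Some \<circ> \<gamma>) s) ((Some \<circ> \<gamma>) t)"
          using lo unfolding cc_def by (simp add: min_def split: if_splits)
      next
        fix t assume st: "t \<in> {t0..t1}"
        have "1 \<le> K (\<gamma> t)" unfolding K_def using p0 q0 by (intro ge_one_powr_ge_zero) auto
        then have "g (\<gamma> t) * 1 \<le> g (\<gamma> t) * ennreal (K (\<gamma> t))"
          by (intro mult_left_mono) auto
        then show "ennreal 1 * g (\<gamma> t) \<le> gh ((Some \<circ> \<gamma>) t)" by (simp add: gh_def)
      qed
      moreover have "line_integral dist (t0, t1, \<gamma>) g = \<infinity>" using gl c by blast
      ultimately show "line_integral (sph_dist a) c' gh = \<infinity>" using c' cc
        by (simp add: ennreal_mult_top top_unique)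
    qed
    show "zero_p_modulus UNIV (sph_dist a) (sph_measure \<mu> a q) p ((\<lambda>(t0, t1, \<gamma>). (t0, t1, Some \<circ> \<gamma>)) ` \<Gamma>)"
      unfolding zero_p_modulus_def using ghm ghi ghl by blast
  }
  {
    assume "zero_p_modulus UNIV (sph_dist a) (sph_measure \<mu> a q) p ((\<lambda>(t0, t1, \<gamma>). (t0, t1, Some \<circ> \<gamma>)) ` \<Gamma>)"
    then obtain gh where ghm: "gh \<in> borel_measurable (borel_of (That a))"
      and ghi: "(\<integral>\<^sup>+ u. ennpow (gh u) p \<partial>sph_measure \<mu> a q) < \<infinity>"
      and ghl: "\<forall>c\<in>(\<lambda>(t0, t1, \<gamma>). (t0, t1, Some \<circ> \<gamma>)) ` \<Gamma>. line_integral (sph_dist a) c gh = \<infinity>"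
      unfolding zero_p_modulus_def by blast
    define K where "K x = (1 + dist x a) powr (- (q / p))" for x
    define g where "g x = gh (Some x) * ennreal (K x)" for x
    have ghS[measurable]: "(\<lambda>x. gh (Some x)) \<in> borel_measurable borel"
      using measurable_comp[OF borel_of_measurable[OF Some_cont[of a]] ghm] by (simp add: borel_of_euclidean comp_def)
    have Km: "(\<lambda>x. ennreal (K x)) \<in> borel_measurable borel"
    proof -
      have d: "(\<lambda>x::'a. dist x a) \<in> borel_measurable borel"
        by (intro borel_measurable_continuous_onI continuous_intros)
      show ?thesis unfolding K_def by measurable (simp_all add: d)
    qed
    have gm: "g \<in> borel_measurable (borel_of (Metric_space.mtopology UNIV dist))"
      unfolding borelX g_def using Km by measurable
    have "(\<integral>\<^sup>+x. ennpow (g x) p \<partial>\<mu>) = (\<integral>\<^sup>+x. ennreal (1 / (1 + dist x a) powr q) * ennpow (gh (Some x)) p \<partial>\<mu>)"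
    proof (intro nn_integral_cong)
      fix x :: 'a
      have Kp: "0 < K x" unfolding K_def using wpos[of x] by simp
      have e: "- (q / p) * p = - q" using p0 by simp
      have "K x powr p = 1 / (1 + dist x a) powr q" unfolding K_def powr_powr e
        by (rule powr_minus_divide)
      then show "ennpow (g x) p = ennreal (1 / (1 + dist x a) powr q) * ennpow (gh (Some x)) p"
        unfolding g_def using ennpow_mult[OF Kp, of "gh (Some x)" p] by (simp add: mult.commute)
    qed
    also have "\<dots> = (\<integral>\<^sup>+u. ennpow (gh u) p \<partial>sph_measure \<mu> a q)"
      by (rule sph_integral[OF sp bs ennpow_meas[OF ghm], symmetric])
    finally have gi: "(\<integral>\<^sup>+x. ennpow (g x) p \<partial>\<mu>) < \<infinity>" using ghi by simp
    have gl: "\<forall>c\<in>\<Gamma>. line_integral dist c g = \<infinity>"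
    proof
      fix c assume c: "c \<in> \<Gamma>"
      then obtain t0 t1 \<gamma> where ce: "c = (t0, t1, \<gamma>)" by (metis prod_cases3)
      have rc: "rectifiable_curve UNIV dist (t0, t1, \<gamma>)" using assms(14) c ce by blast
      have cf1: "curve dist \<gamma> t0 t1" by (rule curve_facts(1)[OF rc])
      have cf2: "curve (sph_dist a) (Some \<circ> \<gamma>) t0 t1" by (rule curve_facts(2)[OF rc])
      have cf3: "\<exists>R\<ge>0. \<forall>t\<in>{t0..t1}. dist (\<gamma> t) a \<le> R" by (rule curve_facts(3)[OF rc])
      obtain R where R: "0 \<le> R" "\<forall>t\<in>{t0..t1}. dist (\<gamma> t) a \<le> R" using cf3 by blast
      define k where "k = (1 + R) powr (- (q / p))"
      have k: "0 < k" unfolding k_def using R by simp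
      have "ennreal (k * 1) * line_integral (sph_dist a) (t0, t1, Some \<circ> \<gamma>) gh \<le> line_integral dist (t0, t1, \<gamma>) g"
      proof (rule LI_compare[OF cf2 cf1 _ _ _ _ ghm])
        show "(0::real) < 1" by simp
        show "0 \<le> k" using k by simp
        fix s t assume st: "s \<in> {t0..t1}" "t \<in> {t0..t1}"
        show "1 * sph_dist a ((Some \<circ> \<gamma>) s) ((Some \<circ> \<gamma>) t) \<le> dist (\<gamma> s) (\<gamma> t)"
          by (simp add: sph_upper)
      next
        fix t assume st: "t \<in> {t0..t1}"
        have "k \<le> K (\<gamma> t)" unfolding k_def K_def
          using R st wpos[of "\<gamma> t"] p0 q0 by (intro powr_mono2') auto
        then have "ennreal k * gh (Some (\<gamma> t)) \<le> ennreal (K (\<gamma> t)) * gh (Some (\<gamma> t))"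
          by (intro mult_right_mono ennreal_leI) auto
        then show "ennreal k * gh ((Some \<circ> \<gamma>) t) \<le> g (\<gamma> t)" by (simp add: g_def mult.commute)
      qed
      moreover have "line_integral (sph_dist a) (t0, t1, Some \<circ> \<gamma>) gh = \<infinity>"
        using ghl c ce by force
      ultimately show "line_integral dist c g = \<infinity>" using ce k
        by (simp add: ennreal_mult_top top_unique)
    qed
    show "zero_p_modulus UNIV dist \<mu> p \<Gamma>"
      unfolding zero_p_modulus_def using gm gi gl by blast
  }
qed


end
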